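(* Every join-congruence uniform left modular lattice is join-extremal, and every meet-congruence uniform left modular lattice is meet-extremal. Moreover, a congruence uniform lattice is extremal if and only if it is left modular.
   Context: All lattices are finite. For a convex subset $C$ of a lattice $L$, let $I_L(C)=\{y\in L\mid\exists x\in C,\ y\le x\}$, and the doubling $L[C]$ is the subposet of $L\times\{0<1\}$ on $\big(I_L(C)\times\{0\}\big)\sqcup\big(((L\setminus I_L(C))\cup C)\times\{1\}\big)$. A lattice is join-congruence uniform (resp. meet-congruence uniform, congruence uniform) if it is obtained from the one-element lattice by successive doublings of nonempty lower pseudo-intervals (resp. upper pseudo-intervals, intervals); a lower (resp. upper) pseudo-interval is a convex union of intervals sharing the same minimum (resp. maximum). A lattice is join-extremal (resp. meet-extremal) if its length (maximum number of elements of a chain minus one) equals its number of join-irreducible (resp. meet-irreducible) elements, and extremal if both hold. An element $a$ is left modular if for all $b<c$, $(b\vee a)\wedge c=b\vee(a\wedge c)$; a lattice is left modular if it has a maximal chain of left modular elements. *)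

theory Defs
  imports "HOL-Algebra.Lattice"
begin

text \<open>Finite lattices are represented as HOL-Algebra gorder records whose
  equality is genuine equality (locale partial_order), which are lattices,
  finite and nonempty.\<close>

definition fin_lattice :: "'a gorder \<Rightarrow> bool" where
  "fin_lattice L \<longleftrightarrow> lattice L \<and> finite (carrier L) \<and> carrier L \<noteq> {}"

definition convex_in :: "'a gorder \<Rightarrow> 'a set \<Rightarrow> bool" where
  "convex_in L C \<longleftrightarrow> C \<subseteq> carrier L \<and>
     (\<forall>x\<in>C. \<forall>y\<in>carrier L. \<forall>z\<in>C. x \<sqsubseteq>\<^bsub>L\<^esub> y \<and> y \<sqsubseteq>\<^bsub>L\<^esub> z \<longrightarrow> y \<in> C)"

definition interval_in :: "'a gorder \<Rightarrow> 'a \<Rightarrow> 'a \<Rightarrow> 'a set" where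
  "interval_in L a b = {x \<in> carrier L. a \<sqsubseteq>\<^bsub>L\<^esub> x \<and> x \<sqsubseteq>\<^bsub>L\<^esub> b}"

definition is_interval :: "'a gorder \<Rightarrow> 'a set \<Rightarrow> bool" where
  "is_interval L C \<longleftrightarrow> (\<exists>a\<in>carrier L. \<exists>b\<in>carrier L. a \<sqsubseteq>\<^bsub>L\<^esub> b \<and> C = interval_in L a b)"

definition lower_pseudo_interval :: "'a gorder \<Rightarrow> 'a set \<Rightarrow> bool" where
  "lower_pseudo_interval L C \<longleftrightarrow> convex_in L C \<and>
     (\<exists>a\<in>carrier L. \<exists>B. B \<noteq> {} \<and> B \<subseteq> {b \<in> carrier L. a \<sqsubseteq>\<^bsub>L\<^esub> b} \<and>
        C = (\<Union>b\<in>B. interval_in L a b))"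

definition upper_pseudo_interval :: "'a gorder \<Rightarrow> 'a set \<Rightarrow> bool" where
  "upper_pseudo_interval L C \<longleftrightarrow> convex_in L C \<and>
     (\<exists>b\<in>carrier L. \<exists>A. A \<noteq> {} \<and> A \<subseteq> {a \<in> carrier L. a \<sqsubseteq>\<^bsub>L\<^esub> b} \<and>
        C = (\<Union>a\<in>A. interval_in L a b))"

definition down_closure :: "'a gorder \<Rightarrow> 'a set \<Rightarrow> 'a set" where
  "down_closure L C = {y \<in> carrier L. \<exists>x\<in>C. y \<sqsubseteq>\<^bsub>L\<^esub> x}"

text \<open>L[C] as a subposet of L \<times> {0 < 1}, with 0 = False, 1 = True.\<close>
definition doubling :: "'a gorder \<Rightarrow> 'a set \<Rightarrow> ('a \<times> bool) gorder" where
  "doubling L C =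
     \<lparr> carrier = (down_closure L C \<times> {False}) \<union>
                 (((carrier L - down_closure L C) \<union> C) \<times> {True}),
       eq = (=),
       le = (\<lambda>(x, s) (y, t). x \<sqsubseteq>\<^bsub>L\<^esub> y \<and> (s \<longrightarrow> t)) \<rparr>"

definition order_iso :: "('a, 'c) gorder_scheme \<Rightarrow> ('b, 'd) gorder_scheme \<Rightarrow> ('a \<Rightarrow> 'b) \<Rightarrow> bool" where
  "order_iso D M f \<longleftrightarrow> bij_betw f (carrier D) (carrier M) \<and>
     (\<forall>x\<in>carrier D. \<forall>y\<in>carrier D. x \<sqsubseteq>\<^bsub>D\<^esub> y \<longleftrightarrow> f x \<sqsubseteq>\<^bsub>M\<^esub> f y)"

inductive obtained_by_doublings :: "('a gorder \<Rightarrow> 'a set \<Rightarrow> bool) \<Rightarrow> 'a gorder \<Rightarrow> bool"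
  for P where
  one: "partial_order M \<Longrightarrow> card (carrier M) = 1 \<Longrightarrow> obtained_by_doublings P M"
| double: "obtained_by_doublings P L \<Longrightarrow> P L C \<Longrightarrow> partial_order M \<Longrightarrow>
           order_iso (doubling L C) M f \<Longrightarrow> obtained_by_doublings P M"

definition join_congruence_uniform :: "'a gorder \<Rightarrow> bool" where
  "join_congruence_uniform L \<longleftrightarrow> obtained_by_doublings lower_pseudo_interval L"

definition meet_congruence_uniform :: "'a gorder \<Rightarrow> bool" where
  "meet_congruence_uniform L \<longleftrightarrow> obtained_by_doublings upper_pseudo_interval L"

definition congruence_uniform :: "'a gorder \<Rightarrow> bool" where
  "congruence_uniform L \<longleftrightarrow> obtained_by_doublings is_interval L"

definition is_chain :: "'a gorder \<Rightarrow> 'a set \<Rightarrow> bool" where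
  "is_chain L C \<longleftrightarrow> C \<subseteq> carrier L \<and>
     (\<forall>x\<in>C. \<forall>y\<in>C. x \<sqsubseteq>\<^bsub>L\<^esub> y \<or> y \<sqsubseteq>\<^bsub>L\<^esub> x)"

definition maximal_chain :: "'a gorder \<Rightarrow> 'a set \<Rightarrow> bool" where
  "maximal_chain L C \<longleftrightarrow> is_chain L C \<and> (\<forall>D. is_chain L D \<and> C \<subseteq> D \<longrightarrow> D = C)"

definition lattice_length :: "'a gorder \<Rightarrow> nat" where
  "lattice_length L = Max {card C | C. is_chain L C} - 1"

definition join_irreducible :: "'a gorder \<Rightarrow> 'a \<Rightarrow> bool" where
  "join_irreducible L j \<longleftrightarrow> j \<in> carrier L \<and> \<not> (\<forall>x\<in>carrier L. j \<sqsubseteq>\<^bsub>L\<^esub> x) \<and>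
     (\<forall>a\<in>carrier L. \<forall>b\<in>carrier L. j = a \<squnion>\<^bsub>L\<^esub> b \<longrightarrow> j = a \<or> j = b)"

definition meet_irreducible :: "'a gorder \<Rightarrow> 'a \<Rightarrow> bool" where
  "meet_irreducible L m \<longleftrightarrow> m \<in> carrier L \<and> \<not> (\<forall>x\<in>carrier L. x \<sqsubseteq>\<^bsub>L\<^esub> m) \<and>
     (\<forall>a\<in>carrier L. \<forall>b\<in>carrier L. m = a \<sqinter>\<^bsub>L\<^esub> b \<longrightarrow> m = a \<or> m = b)"

definition join_extremal :: "'a gorder \<Rightarrow> bool" where
  "join_extremal L \<longleftrightarrow> lattice_length L = card {j. join_irreducible L j}"

definition meet_extremal :: "'a gorder \<Rightarrow> bool" where
  "meet_extremal L \<longleftrightarrow> lattice_length L = card {m. meet_irreducible L m}"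

definition extremal :: "'a gorder \<Rightarrow> bool" where
  "extremal L \<longleftrightarrow> join_extremal L \<and> meet_extremal L"

definition left_modular_elem :: "'a gorder \<Rightarrow> 'a \<Rightarrow> bool" where
  "left_modular_elem L a \<longleftrightarrow> a \<in> carrier L \<and>
     (\<forall>b\<in>carrier L. \<forall>c\<in>carrier L. b \<sqsubset>\<^bsub>L\<^esub> c \<longrightarrow>
        (b \<squnion>\<^bsub>L\<^esub> a) \<sqinter>\<^bsub>L\<^esub> c = b \<squnion>\<^bsub>L\<^esub> (a \<sqinter>\<^bsub>L\<^esub> c))"

definition left_modular :: "'a gorder \<Rightarrow> bool" where
  "left_modular L \<longleftrightarrow> (\<exists>C. maximal_chain L C \<and> (\<forall>a\<in>C. left_modular_elem L a))"

end

theory Submission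
  imports Defs
begin

definition lubp :: "('b, 'c) gorder_scheme \<Rightarrow> 'b \<Rightarrow> 'b \<Rightarrow> 'b \<Rightarrow> bool" where
  "lubp L x y s \<longleftrightarrow> s \<in> carrier L \<and> x \<sqsubseteq>\<^bsub>L\<^esub> s \<and> y \<sqsubseteq>\<^bsub>L\<^esub> s \<and>
     (\<forall>z\<in>carrier L. x \<sqsubseteq>\<^bsub>L\<^esub> z \<and> y \<sqsubseteq>\<^bsub>L\<^esub> z \<longrightarrow> s \<sqsubseteq>\<^bsub>L\<^esub> z)"

definition glbp :: "('b, 'c) gorder_scheme \<Rightarrow> 'b \<Rightarrow> 'b \<Rightarrow> 'b \<Rightarrow> bool" where
  "glbp L x y s \<longleftrightarrow> s \<in> carrier L \<and> s \<sqsubseteq>\<^bsub>L\<^esub> x \<and> s \<sqsubseteq>\<^bsub>L\<^esub> y \<and>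
     (\<forall>z\<in>carrier L. z \<sqsubseteq>\<^bsub>L\<^esub> x \<and> z \<sqsubseteq>\<^bsub>L\<^esub> y \<longrightarrow> z \<sqsubseteq>\<^bsub>L\<^esub> s)"

definition jsd :: "('b, 'c) gorder_scheme \<Rightarrow> bool" where
  "jsd L \<longleftrightarrow> (\<forall>x\<in>carrier L. \<forall>y\<in>carrier L. \<forall>z\<in>carrier L. \<forall>s m.
      lubp L x y s \<longrightarrow> lubp L x z s \<longrightarrow> glbp L y z m \<longrightarrow> lubp L x m s)"

definition msd :: "('b, 'c) gorder_scheme \<Rightarrow> bool" where
  "msd L \<longleftrightarrow> (\<forall>x\<in>carrier L. \<forall>y\<in>carrier L. \<forall>z\<in>carrier L. \<forall>s m.
      glbp L x y s \<longrightarrow> glbp L x z s \<longrightarrow> lubp L y z m \<longrightarrow> glbp L x m s)"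

definition lat :: "('b, 'c) gorder_scheme \<Rightarrow> bool" where
  "lat L \<longleftrightarrow> partial_order L \<and>
     (\<forall>x\<in>carrier L. \<forall>y\<in>carrier L. (\<exists>s. lubp L x y s) \<and> (\<exists>m. glbp L x y m))"

lemma lat_lattice: "lat L \<Longrightarrow> lattice L"
proof -
  assume a: "lat L"
  have po: "partial_order L" using a unfolding lat_def by (rule conjunct1)
  have H: "\<forall>x\<in>carrier L. \<forall>y\<in>carrier L. (\<exists>s. lubp L x y s) \<and> (\<exists>m. glbp L x y m)"
    using a unfolding lat_def by (rule conjunct2)
  have 1: "\<exists>s. least L s (Upper L {x, y})" if xy: "x \<in> carrier L" "y \<in> carrier L" for x y
  proof -
    obtain s where "lubp L x y s" using conjunct1[OF H[rule_format, OF xy]] by (elim exE)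
    hence "least L s (Upper L {x, y})" using xy unfolding lubp_def least_def Upper_def by simp
    thus ?thesis by (rule exI)
  qed
  have 2: "\<exists>s. greatest L s (Lower L {x, y})" if xy: "x \<in> carrier L" "y \<in> carrier L" for x y
  proof -
    obtain s where "glbp L x y s" using conjunct2[OF H[rule_format, OF xy]] by (elim exE)
    hence "greatest L s (Lower L {x, y})" using xy unfolding glbp_def greatest_def Lower_def by simp
    thus ?thesis by (rule exI)
  qed
  show ?thesis
    unfolding lattice_def upper_semilattice_def upper_semilattice_axioms_def
      lower_semilattice_def lower_semilattice_axioms_def using po 1 2 by simp
qed

lemma (in lattice) lubp_join: "x \<in> carrier L \<Longrightarrow> y \<in> carrier L \<Longrightarrow> lubp L x y (x \<squnion> y)"
  unfolding lubp_def by (simp add: join_left join_right join_le)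

lemma (in lattice) glbp_meet: "x \<in> carrier L \<Longrightarrow> y \<in> carrier L \<Longrightarrow> glbp L x y (x \<sqinter> y)"
  unfolding glbp_def by (simp add: meet_left meet_right meet_le)

lemma (in partial_order) lubp_unique: "lubp L x y s \<Longrightarrow> lubp L x y s' \<Longrightarrow> s = s'"
  unfolding lubp_def by (meson le_antisym)

lemma (in partial_order) glbp_unique: "glbp L x y s \<Longrightarrow> glbp L x y s' \<Longrightarrow> s = s'"
  unfolding glbp_def by (meson le_antisym)

lemma lattice_lat: "lattice L \<Longrightarrow> lat L"
proof -
  assume "lattice L"
  then interpret lattice L .
  have "lubp L x y (x \<squnion>\<^bsub>L\<^esub> y) \<and> glbp L x y (x \<sqinter>\<^bsub>L\<^esub> y)" if "x \<in> carrier L" "y \<in> carrier L" for x y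
    using lubp_join glbp_meet that by simp
  thus ?thesis unfolding lat_def using partial_order_axioms by blast
qed

lemma (in lattice) jsd_alg:
  assumes "jsd L" "x \<in> carrier L" "y \<in> carrier L" "z \<in> carrier L" "x \<squnion> y = x \<squnion> z"
  shows "x \<squnion> (y \<sqinter> z) = x \<squnion> y"
proof -
  have "lubp L x (y \<sqinter> z) (x \<squnion> y)"
    using assms(1)[unfolded jsd_def, rule_format, OF assms(2,3,4) lubp_join[OF assms(2,3)]
       lubp_join[OF assms(2,4), folded assms(5)] glbp_meet[OF assms(3,4)]] .
  from lubp_unique[OF this lubp_join[of x "y \<sqinter> z"]] show ?thesis using assms by simp
qed

lemma (in lattice) msd_alg:
  assumes "msd L" "x \<in> carrier L" "y \<in> carrier L" "z \<in> carrier L" "x \<sqinter> y = x \<sqinter> z"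
  shows "x \<sqinter> (y \<squnion> z) = x \<sqinter> y"
proof -
  have "glbp L x (y \<squnion> z) (x \<sqinter> y)"
    using assms(1)[unfolded msd_def, rule_format, OF assms(2,3,4) glbp_meet[OF assms(2,3)]
       glbp_meet[OF assms(2,4), folded assms(5)] lubp_join[OF assms(3,4)]] .
  from glbp_unique[OF this glbp_meet[of x "y \<squnion> z"]] show ?thesis using assms by simp
qed

locale dbl = lattice L for L :: "'a gorder" (structure) +
  fixes C :: "'a set"
  assumes conv: "convex_in L C"
begin

abbreviation DC where "DC \<equiv> down_closure L C"

lemma C_sub: "C \<subseteq> carrier L" using conv unfolding convex_in_def by auto

lemma C_DC: "C \<subseteq> DC"
proof
  fix x assume "x \<in> C"
  moreover hence "x \<in> carrier L" using C_sub by auto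
  ultimately show "x \<in> DC" unfolding down_closure_def by auto
qed

lemma DC_sub: "DC \<subseteq> carrier L" unfolding down_closure_def by auto

lemma DC_down: "y \<in> DC \<Longrightarrow> x \<in> carrier L \<Longrightarrow> x \<sqsubseteq> y \<Longrightarrow> x \<in> DC"
proof -
  assume "y \<in> DC" "x \<in> carrier L" "x \<sqsubseteq> y"
  then obtain c where c: "c \<in> C" "y \<sqsubseteq> c" "y \<in> carrier L" unfolding down_closure_def by auto
  moreover have "x \<sqsubseteq> c" using c C_sub le_trans[OF \<open>x \<sqsubseteq> y\<close> \<open>y \<sqsubseteq> c\<close> \<open>x \<in> carrier L\<close> \<open>y \<in> carrier L\<close>] by auto
  ultimately show "x \<in> DC" unfolding down_closure_def using \<open>x \<in> carrier L\<close> by auto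
qed

lemma carrier_D: "(x, b) \<in> carrier (doubling L C) \<longleftrightarrow>
   x \<in> carrier L \<and> (if b then x \<notin> DC \<or> x \<in> C else x \<in> DC)"
  using C_sub DC_sub unfolding doubling_def by auto

lemma le_D: "(x, b) \<sqsubseteq>\<^bsub>doubling L C\<^esub> (y, c) \<longleftrightarrow> x \<sqsubseteq> y \<and> (b \<longrightarrow> c)"
  unfolding doubling_def by simp

definition jD :: "'a \<times> bool \<Rightarrow> 'a \<times> bool \<Rightarrow> 'a \<times> bool" where
  "jD u v = (fst u \<squnion> fst v, snd u \<or> snd v \<or> fst u \<squnion> fst v \<notin> DC)"

definition mD :: "'a \<times> bool \<Rightarrow> 'a \<times> bool \<Rightarrow> 'a \<times> bool" where
  "mD u v = (fst u \<sqinter> fst v, snd u \<and> snd v \<and> (fst u \<sqinter> fst v \<notin> DC \<or> fst u \<sqinter> fst v \<in> C))"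

lemma conv_mem: "c1 \<in> C \<Longrightarrow> c2 \<in> C \<Longrightarrow> y \<in> carrier L \<Longrightarrow> c1 \<sqsubseteq> y \<Longrightarrow> y \<sqsubseteq> c2 \<Longrightarrow> y \<in> C"
  using conv unfolding convex_in_def by blast

lemma DC_mem: "y \<in> DC \<Longrightarrow> \<exists>c\<in>C. y \<sqsubseteq> c"
  unfolding down_closure_def by auto


lemma jD_lub:
  assumes u: "(x, a) \<in> carrier (doubling L C)" and v: "(y, b) \<in> carrier (doubling L C)"
  shows "lubp (doubling L C) (x, a) (y, b) (jD (x, a) (y, b))"
proof -
  have x: "x \<in> carrier L" and y: "y \<in> carrier L" using u v by (simp_all add: carrier_D)
  have xy: "x \<squnion> y \<in> carrier L" using x y by simp
  have jl: "x \<sqsubseteq> x \<squnion> y" by (rule join_left[OF x y])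
  have jr: "y \<sqsubseteq> x \<squnion> y" by (rule join_right[OF x y])
  have mem: "jD (x, a) (y, b) \<in> carrier (doubling L C)"
  proof (cases "x \<squnion> y \<in> DC")
    case True
    then obtain c where c: "c \<in> C" "x \<squnion> y \<sqsubseteq> c" using DC_mem by blast
    show ?thesis
    proof (cases "a \<or> b")
      case False thus ?thesis using True xy by (simp add: jD_def carrier_D)
    next
      case ab: True
      have "x \<squnion> y \<in> C"
      proof (cases a)
        case True
        have "x \<in> DC" by (rule DC_down[OF \<open>x \<squnion> y \<in> DC\<close> x jl])
        hence "x \<in> C" using u True by (simp add: carrier_D)
        thus ?thesis by (rule conv_mem[OF _ c(1) xy jl c(2)])
      next
        case False
        hence b using ab by simp
        have "y \<in> DC" by (rule DC_down[OF \<open>x \<squnion> y \<in> DC\<close> y jr])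
        hence "y \<in> C" using v \<open>b\<close> by (simp add: carrier_D)
        thus ?thesis by (rule conv_mem[OF _ c(1) xy jr c(2)])
      qed
      thus ?thesis using ab xy by (simp add: jD_def carrier_D)
    qed
  next
    case False thus ?thesis using xy by (simp add: jD_def carrier_D)
  qed
  show ?thesis unfolding lubp_def
  proof (intro conjI ballI impI)
    show "jD (x, a) (y, b) \<in> carrier (doubling L C)" by (rule mem)
    show "(x, a) \<sqsubseteq>\<^bsub>doubling L C\<^esub> jD (x, a) (y, b)" using jl by (simp add: jD_def le_D)
    show "(y, b) \<sqsubseteq>\<^bsub>doubling L C\<^esub> jD (x, a) (y, b)" using jr by (simp add: jD_def le_D)
  next
    fix w assume w: "w \<in> carrier (doubling L C)" and le: "(x, a) \<sqsubseteq>\<^bsub>doubling L C\<^esub> w \<and> (y, b) \<sqsubseteq>\<^bsub>doubling L C\<^esub> w"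
    obtain z r where wz: "w = (z, r)" by (cases w)
    have z: "z \<in> carrier L" using w wz by (simp add: carrier_D)
    have le1: "x \<sqsubseteq> z" "y \<sqsubseteq> z" "a \<longrightarrow> r" "b \<longrightarrow> r" using le wz by (simp_all add: le_D)
    have l1: "x \<squnion> y \<sqsubseteq> z" by (rule join_le[OF le1(1,2) x y z])
    have "x \<squnion> y \<notin> DC \<Longrightarrow> r"
    proof (rule ccontr)
      assume a1: "x \<squnion> y \<notin> DC" and "\<not> r"
      hence "z \<in> DC" using w wz by (simp add: carrier_D)
      from DC_down[OF this xy l1] a1 show False by simp
    qed
    thus "jD (x, a) (y, b) \<sqsubseteq>\<^bsub>doubling L C\<^esub> w" using le1 wz l1 by (auto simp: jD_def le_D)
  qed
qed

lemma mD_glb: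
  assumes u: "(x, a) \<in> carrier (doubling L C)" and v: "(y, b) \<in> carrier (doubling L C)"
  shows "glbp (doubling L C) (x, a) (y, b) (mD (x, a) (y, b))"
proof -
  have x: "x \<in> carrier L" and y: "y \<in> carrier L" using u v by (simp_all add: carrier_D)
  have xy: "x \<sqinter> y \<in> carrier L" using x y by simp
  have ml: "x \<sqinter> y \<sqsubseteq> x" by (rule meet_left[OF x y])
  have mr: "x \<sqinter> y \<sqsubseteq> y" by (rule meet_right[OF x y])
  have mem: "mD (x, a) (y, b) \<in> carrier (doubling L C)"
  proof (cases "a \<and> b \<and> (x \<sqinter> y \<notin> DC \<or> x \<sqinter> y \<in> C)")
    case True thus ?thesis using xy by (simp add: mD_def carrier_D)
  next
    case False
    have "x \<sqinter> y \<in> DC"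
    proof (cases a)
      case False
      hence "x \<in> DC" using u by (simp add: carrier_D)
      thus ?thesis by (rule DC_down[OF _ xy ml])
    next
      case True
      show ?thesis
      proof (cases b)
        case False
        hence "y \<in> DC" using v by (simp add: carrier_D)
        thus ?thesis by (rule DC_down[OF _ xy mr])
      next
        case True
        thus ?thesis using \<open>a\<close> False by simp
      qed
    qed
    thus ?thesis using False xy by (simp add: mD_def carrier_D)
  qed
  show ?thesis unfolding glbp_def
  proof (intro conjI ballI impI)
    show "mD (x, a) (y, b) \<in> carrier (doubling L C)" by (rule mem)
    show "mD (x, a) (y, b) \<sqsubseteq>\<^bsub>doubling L C\<^esub> (x, a)" using ml by (simp add: mD_def le_D)
    show "mD (x, a) (y, b) \<sqsubseteq>\<^bsub>doubling L C\<^esub> (y, b)" using mr by (simp add: mD_def le_D)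
  next
    fix w assume w: "w \<in> carrier (doubling L C)" and le: "w \<sqsubseteq>\<^bsub>doubling L C\<^esub> (x, a) \<and> w \<sqsubseteq>\<^bsub>doubling L C\<^esub> (y, b)"
    obtain z r where wz: "w = (z, r)" by (cases w)
    have z: "z \<in> carrier L" using w wz by (simp add: carrier_D)
    have le1: "z \<sqsubseteq> x" "z \<sqsubseteq> y" "r \<longrightarrow> a" "r \<longrightarrow> b" using le wz by (simp_all add: le_D)
    have l1: "z \<sqsubseteq> x \<sqinter> y" by (rule meet_le[OF le1(1,2) x y z])
    have "x \<sqinter> y \<in> C" if r: r and d: "x \<sqinter> y \<in> DC"
    proof -
      have "z \<in> DC" by (rule DC_down[OF d z l1])
      hence zC: "z \<in> C" using w wz r by (simp add: carrier_D)
      obtain c where c: "c \<in> C" "x \<sqinter> y \<sqsubseteq> c" using DC_mem[OF d] by blast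
      show ?thesis by (rule conv_mem[OF zC c(1) xy l1 c(2)])
    qed
    thus "w \<sqsubseteq>\<^bsub>doubling L C\<^esub> mD (x, a) (y, b)" using le1 wz l1 by (auto simp: mD_def le_D)
  qed
qed

lemma D_antisym:
  assumes "u \<in> carrier (doubling L C)" "w \<in> carrier (doubling L C)"
    "u \<sqsubseteq>\<^bsub>doubling L C\<^esub> w" "w \<sqsubseteq>\<^bsub>doubling L C\<^esub> u"
  shows "u = w"
proof -
  obtain p q where u: "u = (p, q)" by (cases u)
  obtain p' q' where w: "w = (p', q')" by (cases w)
  have "p \<in> carrier L" "p' \<in> carrier L" using assms u w by (simp_all add: carrier_D)
  moreover have "p \<sqsubseteq> p'" "p' \<sqsubseteq> p" "q = q'" using assms u w by (auto simp: le_D)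
  ultimately show ?thesis using u w le_antisym by simp
qed

lemma lubD_unique: "lubp (doubling L C) u v s \<Longrightarrow> lubp (doubling L C) u v s' \<Longrightarrow> s = s'"
  unfolding lubp_def using D_antisym by blast

lemma glbD_unique: "glbp (doubling L C) u v s \<Longrightarrow> glbp (doubling L C) u v s' \<Longrightarrow> s = s'"
  unfolding glbp_def using D_antisym by blast

lemma jsd_D:
  assumes J: "jsd L" and a0: "a0 \<in> C" and amin: "\<And>cc. cc \<in> C \<Longrightarrow> a0 \<sqsubseteq> cc"
  shows "jsd (doubling L C)"
  unfolding jsd_def
proof (intro ballI allI impI)
  fix u v w s m
  assume u: "u \<in> carrier (doubling L C)" and v: "v \<in> carrier (doubling L C)"
    and w: "w \<in> carrier (doubling L C)"
    and h1: "lubp (doubling L C) u v s" and h2: "lubp (doubling L C) u w s"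
    and h3: "glbp (doubling L C) v w m"
  obtain x a where ux: "u = (x, a)" by (cases u)
  obtain y b where vy: "v = (y, b)" by (cases v)
  obtain z c where wz: "w = (z, c)" by (cases w)
  have x: "x \<in> carrier L" and y: "y \<in> carrier L" and z: "z \<in> carrier L"
    using u v w ux vy wz by (simp_all add: carrier_D)
  have s1: "s = jD (x, a) (y, b)" using lubD_unique[OF h1[unfolded ux vy] jD_lub[OF u[unfolded ux] v[unfolded vy]]] .
  have s2: "s = jD (x, a) (z, c)" using lubD_unique[OF h2[unfolded ux wz] jD_lub[OF u[unfolded ux] w[unfolded wz]]] .
  have m: "m = mD (y, b) (z, c)" using glbD_unique[OF h3[unfolded vy wz] mD_glb[OF v[unfolded vy] w[unfolded wz]]] .
  have eq: "(x \<squnion> y, a \<or> b \<or> x \<squnion> y \<notin> DC) = (x \<squnion> z, a \<or> c \<or> x \<squnion> z \<notin> DC)"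
    using s1 s2 unfolding jD_def fst_conv snd_conv by metis
  have e1: "x \<squnion> y = x \<squnion> z" using arg_cong[OF eq, of fst] by (simp only: fst_conv)
  have e2: "(a \<or> b \<or> x \<squnion> y \<notin> DC) = (a \<or> c \<or> x \<squnion> z \<notin> DC)"
    using arg_cong[OF eq, of snd] by (simp only: snd_conv)
  have f: "x \<squnion> (y \<sqinter> z) = x \<squnion> y" by (rule jsd_alg[OF J x y z e1])
  have bits: "(a \<or> (b \<and> c \<and> (y \<sqinter> z \<notin> DC \<or> y \<sqinter> z \<in> C)) \<or> x \<squnion> y \<notin> DC) = (a \<or> b \<or> x \<squnion> y \<notin> DC)"
  proof (cases "a \<or> x \<squnion> y \<notin> DC")
    case True thus ?thesis by auto
  next
    case False
    hence na: "\<not> a" and X: "x \<squnion> y \<in> DC" by auto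
    have bc: "b = c" using e2 e1 na X by simp
    show ?thesis
    proof (cases b)
      case False thus ?thesis using na X by simp
    next
      case True
      have "y \<in> DC" by (rule DC_down[OF X y join_right[OF x y]])
      hence yC: "y \<in> C" using v vy True by (simp add: carrier_D)
      have "z \<in> DC" by (rule DC_down[OF X[unfolded e1] z join_right[OF x z]])
      hence zC: "z \<in> C" using w wz True bc by (simp add: carrier_D)
      have a0c: "a0 \<in> carrier L" using a0 C_sub by auto
      have yz: "y \<sqinter> z \<in> carrier L" using y z by simp
      have "a0 \<sqsubseteq> y \<sqinter> z" by (rule meet_le[OF amin[OF yC] amin[OF zC] y z a0c])
      hence "y \<sqinter> z \<in> C" by (rule conv_mem[OF a0 yC yz _ meet_left[OF y z]])
      thus ?thesis using True bc na X by simp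
    qed
  qed
  have mc: "(y \<sqinter> z, b \<and> c \<and> (y \<sqinter> z \<notin> DC \<or> y \<sqinter> z \<in> C)) \<in> carrier (doubling L C)"
    using h3 m unfolding glbp_def by (simp add: mD_def)
  have "lubp (doubling L C) (x, a) (y \<sqinter> z, b \<and> c \<and> (y \<sqinter> z \<notin> DC \<or> y \<sqinter> z \<in> C))
     (jD (x, a) (y \<sqinter> z, b \<and> c \<and> (y \<sqinter> z \<notin> DC \<or> y \<sqinter> z \<in> C)))"
    by (rule jD_lub[OF u[unfolded ux] mc])
  moreover have "jD (x, a) (y \<sqinter> z, b \<and> c \<and> (y \<sqinter> z \<notin> DC \<or> y \<sqinter> z \<in> C)) = s"
    using s1 f bits by (simp add: jD_def)
  ultimately show "lubp (doubling L C) u m s" using ux m by (simp add: mD_def)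
qed

lemma msd_D:
  assumes M: "msd L" and b0: "b0 \<in> C" and bmax: "\<And>cc. cc \<in> C \<Longrightarrow> cc \<sqsubseteq> b0"
  shows "msd (doubling L C)"
  unfolding msd_def
proof (intro ballI allI impI)
  fix u v w s m
  assume u: "u \<in> carrier (doubling L C)" and v: "v \<in> carrier (doubling L C)"
    and w: "w \<in> carrier (doubling L C)"
    and h1: "glbp (doubling L C) u v s" and h2: "glbp (doubling L C) u w s"
    and h3: "lubp (doubling L C) v w m"
  obtain x a where ux: "u = (x, a)" by (cases u)
  obtain y b where vy: "v = (y, b)" by (cases v)
  obtain z c where wz: "w = (z, c)" by (cases w)
  have x: "x \<in> carrier L" and y: "y \<in> carrier L" and z: "z \<in> carrier L"
    using u v w ux vy wz by (simp_all add: carrier_D)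
  have s1: "s = mD (x, a) (y, b)" using glbD_unique[OF h1[unfolded ux vy] mD_glb[OF u[unfolded ux] v[unfolded vy]]] .
  have s2: "s = mD (x, a) (z, c)" using glbD_unique[OF h2[unfolded ux wz] mD_glb[OF u[unfolded ux] w[unfolded wz]]] .
  have m: "m = jD (y, b) (z, c)" using lubD_unique[OF h3[unfolded vy wz] jD_lub[OF v[unfolded vy] w[unfolded wz]]] .
  have eq: "(x \<sqinter> y, a \<and> b \<and> (x \<sqinter> y \<notin> DC \<or> x \<sqinter> y \<in> C)) = (x \<sqinter> z, a \<and> c \<and> (x \<sqinter> z \<notin> DC \<or> x \<sqinter> z \<in> C))"
    using s1 s2 unfolding mD_def fst_conv snd_conv by metis
  have e1: "x \<sqinter> y = x \<sqinter> z" using arg_cong[OF eq, of fst] by (simp only: fst_conv)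
  have e2: "(a \<and> b \<and> (x \<sqinter> y \<notin> DC \<or> x \<sqinter> y \<in> C)) = (a \<and> c \<and> (x \<sqinter> z \<notin> DC \<or> x \<sqinter> z \<in> C))"
    using arg_cong[OF eq, of snd] by (simp only: snd_conv)
  have f: "x \<sqinter> (y \<squnion> z) = x \<sqinter> y" by (rule msd_alg[OF M x y z e1])
  have bits: "(a \<and> (b \<or> c \<or> y \<squnion> z \<notin> DC) \<and> (x \<sqinter> y \<notin> DC \<or> x \<sqinter> y \<in> C)) = (a \<and> b \<and> (x \<sqinter> y \<notin> DC \<or> x \<sqinter> y \<in> C))"
  proof (cases "a \<and> (x \<sqinter> y \<notin> DC \<or> x \<sqinter> y \<in> C)")
    case False thus ?thesis by auto
  next
    case True
    hence bc: "b = c" using e2 e1 by simp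
    show ?thesis
    proof (cases b)
      case True thus ?thesis by simp
    next
      case False
      hence yD: "y \<in> DC" using v vy by (simp add: carrier_D)
      have zD: "z \<in> DC" using w wz False bc by (simp add: carrier_D)
      have b0c: "b0 \<in> carrier L" using b0 C_sub by auto
      obtain c1 where c1: "c1 \<in> C" "y \<sqsubseteq> c1" using DC_mem[OF yD] by blast
      obtain c2 where c2: "c2 \<in> C" "z \<sqsubseteq> c2" using DC_mem[OF zD] by blast
      have c1c: "c1 \<in> carrier L" and c2c: "c2 \<in> carrier L" using c1 c2 C_sub by auto
      have yb: "y \<sqsubseteq> b0" by (rule le_trans[OF c1(2) bmax[OF c1(1)] y c1c b0c])
      have zb: "z \<sqsubseteq> b0" by (rule le_trans[OF c2(2) bmax[OF c2(1)] z c2c b0c])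
      have "y \<squnion> z \<sqsubseteq> b0" by (rule join_le[OF yb zb y z b0c])
      hence "y \<squnion> z \<in> DC" using C_DC b0 DC_down[of b0 "y \<squnion> z"] y z by auto
      thus ?thesis using False bc True by simp
    qed
  qed
  have mc: "(y \<squnion> z, b \<or> c \<or> y \<squnion> z \<notin> DC) \<in> carrier (doubling L C)"
    using h3 m unfolding lubp_def by (simp add: jD_def)
  have "glbp (doubling L C) (x, a) (y \<squnion> z, b \<or> c \<or> y \<squnion> z \<notin> DC)
     (mD (x, a) (y \<squnion> z, b \<or> c \<or> y \<squnion> z \<notin> DC))"
    by (rule mD_glb[OF u[unfolded ux] mc])
  moreover have "mD (x, a) (y \<squnion> z, b \<or> c \<or> y \<squnion> z \<notin> DC) = s"
    using s1 f bits by (simp add: mD_def)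
  ultimately show "glbp (doubling L C) u m s" using ux m by (simp add: jD_def)
qed

end

lemma iso_pre:
  assumes "order_iso D M f" "x \<in> carrier M"
  shows "\<exists>x'\<in>carrier D. x = f x'"
  using assms unfolding order_iso_def bij_betw_def by auto

lemma iso_mem:
  assumes "order_iso D M f" "x \<in> carrier D"
  shows "f x \<in> carrier M"
  using assms unfolding order_iso_def bij_betw_def by auto

lemma iso_le:
  assumes "order_iso D M f" "x \<in> carrier D" "y \<in> carrier D"
  shows "f x \<sqsubseteq>\<^bsub>M\<^esub> f y \<longleftrightarrow> x \<sqsubseteq>\<^bsub>D\<^esub> y"
  using assms unfolding order_iso_def by auto

lemma iso_lubp:
  assumes iso: "order_iso D M f" and u: "u \<in> carrier D" and v: "v \<in> carrier D" and s: "s \<in> carrier D"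
  shows "lubp M (f u) (f v) (f s) \<longleftrightarrow> lubp D u v s"
proof
  assume h: "lubp M (f u) (f v) (f s)"
  show "lubp D u v s" unfolding lubp_def
  proof (intro conjI ballI impI)
    show "s \<in> carrier D" by (rule s)
    show "u \<sqsubseteq>\<^bsub>D\<^esub> s" using h iso_le[OF iso u s] unfolding lubp_def by simp
    show "v \<sqsubseteq>\<^bsub>D\<^esub> s" using h iso_le[OF iso v s] unfolding lubp_def by simp
  next
    fix z assume z: "z \<in> carrier D" and "u \<sqsubseteq>\<^bsub>D\<^esub> z \<and> v \<sqsubseteq>\<^bsub>D\<^esub> z"
    hence "f u \<sqsubseteq>\<^bsub>M\<^esub> f z \<and> f v \<sqsubseteq>\<^bsub>M\<^esub> f z" using iso_le[OF iso u z] iso_le[OF iso v z] by simp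
    hence "f s \<sqsubseteq>\<^bsub>M\<^esub> f z" using h iso_mem[OF iso z] unfolding lubp_def by blast
    thus "s \<sqsubseteq>\<^bsub>D\<^esub> z" using iso_le[OF iso s z] by simp
  qed
next
  assume h: "lubp D u v s"
  show "lubp M (f u) (f v) (f s)" unfolding lubp_def
  proof (intro conjI ballI impI)
    show "f s \<in> carrier M" by (rule iso_mem[OF iso s])
    show "f u \<sqsubseteq>\<^bsub>M\<^esub> f s" using h iso_le[OF iso u s] unfolding lubp_def by simp
    show "f v \<sqsubseteq>\<^bsub>M\<^esub> f s" using h iso_le[OF iso v s] unfolding lubp_def by simp
  next
    fix z assume z: "z \<in> carrier M" and le: "f u \<sqsubseteq>\<^bsub>M\<^esub> z \<and> f v \<sqsubseteq>\<^bsub>M\<^esub> z"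
    obtain z' where z': "z' \<in> carrier D" "z = f z'" using iso_pre[OF iso z] by blast
    have "u \<sqsubseteq>\<^bsub>D\<^esub> z' \<and> v \<sqsubseteq>\<^bsub>D\<^esub> z'" using le z' iso_le[OF iso u z'(1)] iso_le[OF iso v z'(1)] by simp
    hence "s \<sqsubseteq>\<^bsub>D\<^esub> z'" using h z'(1) unfolding lubp_def by blast
    thus "f s \<sqsubseteq>\<^bsub>M\<^esub> z" using iso_le[OF iso s z'(1)] z' by simp
  qed
qed

lemma iso_glbp:
  assumes iso: "order_iso D M f" and u: "u \<in> carrier D" and v: "v \<in> carrier D" and s: "s \<in> carrier D"
  shows "glbp M (f u) (f v) (f s) \<longleftrightarrow> glbp D u v s"
proof
  assume h: "glbp M (f u) (f v) (f s)"
  show "glbp D u v s" unfolding glbp_def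
  proof (intro conjI ballI impI)
    show "s \<in> carrier D" by (rule s)
    show "s \<sqsubseteq>\<^bsub>D\<^esub> u" using h iso_le[OF iso s u] unfolding glbp_def by simp
    show "s \<sqsubseteq>\<^bsub>D\<^esub> v" using h iso_le[OF iso s v] unfolding glbp_def by simp
  next
    fix z assume z: "z \<in> carrier D" and "z \<sqsubseteq>\<^bsub>D\<^esub> u \<and> z \<sqsubseteq>\<^bsub>D\<^esub> v"
    hence "f z \<sqsubseteq>\<^bsub>M\<^esub> f u \<and> f z \<sqsubseteq>\<^bsub>M\<^esub> f v" using iso_le[OF iso z u] iso_le[OF iso z v] by simp
    hence "f z \<sqsubseteq>\<^bsub>M\<^esub> f s" using h iso_mem[OF iso z] unfolding glbp_def by blast
    thus "z \<sqsubseteq>\<^bsub>D\<^esub> s" using iso_le[OF iso z s] by simp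
  qed
next
  assume h: "glbp D u v s"
  show "glbp M (f u) (f v) (f s)" unfolding glbp_def
  proof (intro conjI ballI impI)
    show "f s \<in> carrier M" by (rule iso_mem[OF iso s])
    show "f s \<sqsubseteq>\<^bsub>M\<^esub> f u" using h iso_le[OF iso s u] unfolding glbp_def by simp
    show "f s \<sqsubseteq>\<^bsub>M\<^esub> f v" using h iso_le[OF iso s v] unfolding glbp_def by simp
  next
    fix z assume z: "z \<in> carrier M" and le: "z \<sqsubseteq>\<^bsub>M\<^esub> f u \<and> z \<sqsubseteq>\<^bsub>M\<^esub> f v"
    obtain z' where z': "z' \<in> carrier D" "z = f z'" using iso_pre[OF iso z] by blast
    have "z' \<sqsubseteq>\<^bsub>D\<^esub> u \<and> z' \<sqsubseteq>\<^bsub>D\<^esub> v" using le z' iso_le[OF iso z'(1) u] iso_le[OF iso z'(1) v] by simp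
    hence "z' \<sqsubseteq>\<^bsub>D\<^esub> s" using h z'(1) unfolding glbp_def by blast
    thus "z \<sqsubseteq>\<^bsub>M\<^esub> f s" using iso_le[OF iso z'(1) s] z' by simp
  qed
qed

lemma iso_bounds:
  assumes iso: "order_iso D M f"
    and L: "\<forall>x\<in>carrier D. \<forall>y\<in>carrier D. (\<exists>s. lubp D x y s) \<and> (\<exists>m. glbp D x y m)"
  shows "\<forall>x\<in>carrier M. \<forall>y\<in>carrier M. (\<exists>s. lubp M x y s) \<and> (\<exists>m. glbp M x y m)"
proof (intro ballI conjI)
  fix x y assume x: "x \<in> carrier M" and y: "y \<in> carrier M"
  obtain x' where x': "x' \<in> carrier D" "x = f x'" using iso_pre[OF iso x] by blast
  obtain y' where y': "y' \<in> carrier D" "y = f y'" using iso_pre[OF iso y] by blast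
  obtain s where s: "lubp D x' y' s" using L x'(1) y'(1) by blast
  obtain m where m: "glbp D x' y' m" using L x'(1) y'(1) by blast
  have sc: "s \<in> carrier D" using s unfolding lubp_def by simp
  have mc: "m \<in> carrier D" using m unfolding glbp_def by simp
  show "\<exists>s. lubp M x y s" using iso_lubp[OF iso x'(1) y'(1) sc] s x' y' by blast
  show "\<exists>m. glbp M x y m" using iso_glbp[OF iso x'(1) y'(1) mc] m x' y' by blast
qed

lemma iso_jsd:
  assumes iso: "order_iso D M f" and J: "jsd D"
  shows "jsd M"
  unfolding jsd_def
proof (intro ballI allI impI)
  fix x y z s m
  assume x: "x \<in> carrier M" and y: "y \<in> carrier M" and z: "z \<in> carrier M"
    and h1: "lubp M x y s" and h2: "lubp M x z s" and h3: "glbp M y z m"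
  obtain x' where x': "x' \<in> carrier D" "x = f x'" using iso_pre[OF iso x] by blast
  obtain y' where y': "y' \<in> carrier D" "y = f y'" using iso_pre[OF iso y] by blast
  obtain z' where z': "z' \<in> carrier D" "z = f z'" using iso_pre[OF iso z] by blast
  have "s \<in> carrier M" using h1 unfolding lubp_def by simp
  then obtain s' where s': "s' \<in> carrier D" "s = f s'" using iso_pre[OF iso] by blast
  have "m \<in> carrier M" using h3 unfolding glbp_def by simp
  then obtain m' where m': "m' \<in> carrier D" "m = f m'" using iso_pre[OF iso] by blast
  have "lubp D x' y' s'" using iso_lubp[OF iso x'(1) y'(1) s'(1)] h1 x' y' s' by simp
  moreover have "lubp D x' z' s'" using iso_lubp[OF iso x'(1) z'(1) s'(1)] h2 x' z' s' by simp
  moreover have "glbp D y' z' m'" using iso_glbp[OF iso y'(1) z'(1) m'(1)] h3 y' z' m' by simp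
  ultimately have "lubp D x' m' s'" using J x'(1) y'(1) z'(1) unfolding jsd_def by blast
  thus "lubp M x m s" using iso_lubp[OF iso x'(1) m'(1) s'(1)] x' m' s' by simp
qed

lemma iso_msd:
  assumes iso: "order_iso D M f" and J: "msd D"
  shows "msd M"
  unfolding msd_def
proof (intro ballI allI impI)
  fix x y z s m
  assume x: "x \<in> carrier M" and y: "y \<in> carrier M" and z: "z \<in> carrier M"
    and h1: "glbp M x y s" and h2: "glbp M x z s" and h3: "lubp M y z m"
  obtain x' where x': "x' \<in> carrier D" "x = f x'" using iso_pre[OF iso x] by blast
  obtain y' where y': "y' \<in> carrier D" "y = f y'" using iso_pre[OF iso y] by blast
  obtain z' where z': "z' \<in> carrier D" "z = f z'" using iso_pre[OF iso z] by blast
  have "s \<in> carrier M" using h1 unfolding glbp_def by simp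
  then obtain s' where s': "s' \<in> carrier D" "s = f s'" using iso_pre[OF iso] by blast
  have "m \<in> carrier M" using h3 unfolding lubp_def by simp
  then obtain m' where m': "m' \<in> carrier D" "m = f m'" using iso_pre[OF iso] by blast
  have "glbp D x' y' s'" using iso_glbp[OF iso x'(1) y'(1) s'(1)] h1 x' y' s' by simp
  moreover have "glbp D x' z' s'" using iso_glbp[OF iso x'(1) z'(1) s'(1)] h2 x' z' s' by simp
  moreover have "lubp D y' z' m'" using iso_lubp[OF iso y'(1) z'(1) m'(1)] h3 y' z' m' by simp
  ultimately have "glbp D x' m' s'" using J x'(1) y'(1) z'(1) unfolding msd_def by blast
  thus "glbp M x m s" using iso_glbp[OF iso x'(1) m'(1) s'(1)] x' m' s' by simp
qed

lemma base_case:
  assumes po: "partial_order M" and c1: "card (carrier M) = 1"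
  shows "lat M \<and> jsd M \<and> msd M"
proof -
  interpret partial_order M by (rule po)
  obtain e where e: "carrier M = {e}" using c1 card_1_singletonE by blast
  have le: "e \<sqsubseteq>\<^bsub>M\<^esub> e" using e by simp
  have l: "lubp M e e e" "glbp M e e e" using e le unfolding lubp_def glbp_def by auto
  have ls: "lubp M x y s \<Longrightarrow> s = e" for x y s using e unfolding lubp_def by auto
  have gs: "glbp M x y s \<Longrightarrow> s = e" for x y s using e unfolding glbp_def by auto
  have ce: "x \<in> carrier M \<Longrightarrow> x = e" for x using e by auto
  have "\<forall>x\<in>carrier M. \<forall>y\<in>carrier M. (\<exists>s. lubp M x y s) \<and> (\<exists>m. glbp M x y m)"
  proof (intro ballI conjI)
    fix x y assume "x \<in> carrier M" "y \<in> carrier M"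
    hence xy: "x = e" "y = e" using ce by auto
    show "\<exists>s. lubp M x y s" by (rule exI[of _ e]) (simp add: xy l(1))
    show "\<exists>s. glbp M x y s" by (rule exI[of _ e]) (simp add: xy l(2))
  qed
  hence "lat M" unfolding lat_def using po by (rule conjI[rotated])
  moreover have "jsd M" unfolding jsd_def
  proof (intro ballI allI impI)
    fix x y z s m assume "x \<in> carrier M" and h: "lubp M x y s" "glbp M y z m"
    hence "x = e" "s = e" "m = e" using ce ls gs by auto
    thus "lubp M x m s" using l(1) by simp
  qed
  moreover have "msd M" unfolding msd_def
  proof (intro ballI allI impI)
    fix x y z s m assume "x \<in> carrier M" and h: "glbp M x y s" "lubp M y z m"
    hence "x = e" "s = e" "m = e" using ce ls gs by auto
    thus "glbp M x m s" using l(2) by simp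
  qed
  ultimately show ?thesis by simp
qed

lemma dbl_bounds:
  assumes "dbl L C"
  shows "\<forall>x\<in>carrier (doubling L C). \<forall>y\<in>carrier (doubling L C).
     (\<exists>s. lubp (doubling L C) x y s) \<and> (\<exists>m. glbp (doubling L C) x y m)"
proof (intro ballI conjI)
  interpret d: dbl L C by (rule assms)
  fix u v assume u: "u \<in> carrier (doubling L C)" and v: "v \<in> carrier (doubling L C)"
  obtain x a where ux: "u = (x, a)" by (cases u)
  obtain y b where vy: "v = (y, b)" by (cases v)
  show "\<exists>s. lubp (doubling L C) u v s" using d.jD_lub[OF u[unfolded ux] v[unfolded vy]] ux vy by blast
  show "\<exists>s. glbp (doubling L C) u v s" using d.mD_glb[OF u[unfolded ux] v[unfolded vy]] ux vy by blast
qed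

lemma jcu_jsd: "obtained_by_doublings lower_pseudo_interval M \<Longrightarrow> lat M \<and> jsd M"
proof (induction rule: obtained_by_doublings.induct)
  case (one M) thus ?case using base_case by blast
next
  case (double L C M f)
  have latL: "lat L" and jL: "jsd L" using double.IH by auto
  have lpi: "lower_pseudo_interval L C" by fact
  then obtain a B where conv: "convex_in L C" and a: "a \<in> carrier L" and B: "B \<noteq> {}"
    "B \<subseteq> {b \<in> carrier L. a \<sqsubseteq>\<^bsub>L\<^esub> b}" and Ceq: "C = (\<Union>b\<in>B. interval_in L a b)"
    unfolding lower_pseudo_interval_def by blast
  have dL: "dbl L C" unfolding dbl_def dbl_axioms_def using lat_lattice[OF latL] conv by simp
  interpret d: dbl L C by (rule dL)
  obtain b where b: "b \<in> B" using B(1) by blast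
  have "a \<in> interval_in L a b" using a b B(2) unfolding interval_in_def by auto
  hence a0: "a \<in> C" using Ceq b by blast
  have amin: "a \<sqsubseteq>\<^bsub>L\<^esub> cc" if "cc \<in> C" for cc using that Ceq unfolding interval_in_def by auto
  have jD: "jsd (doubling L C)" by (rule d.jsd_D[OF jL a0 amin])
  have iso: "order_iso (doubling L C) M f" by fact
  have "lat M" unfolding lat_def using double.hyps(3) iso_bounds[OF iso dbl_bounds[OF dL]] by simp
  moreover have "jsd M" by (rule iso_jsd[OF iso jD])
  ultimately show ?case by simp
qed

lemma mcu_msd: "obtained_by_doublings upper_pseudo_interval M \<Longrightarrow> lat M \<and> msd M"
proof (induction rule: obtained_by_doublings.induct)
  case (one M) thus ?case using base_case by blast
next
  case (double L C M f)
  have latL: "lat L" and jL: "msd L" using double.IH by auto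
  have lpi: "upper_pseudo_interval L C" by fact
  then obtain a B where conv: "convex_in L C" and a: "a \<in> carrier L" and B: "B \<noteq> {}"
    "B \<subseteq> {b \<in> carrier L. b \<sqsubseteq>\<^bsub>L\<^esub> a}" and Ceq: "C = (\<Union>b\<in>B. interval_in L b a)"
    unfolding upper_pseudo_interval_def by blast
  have dL: "dbl L C" unfolding dbl_def dbl_axioms_def using lat_lattice[OF latL] conv by simp
  interpret d: dbl L C by (rule dL)
  obtain b where b: "b \<in> B" using B(1) by blast
  have "a \<in> interval_in L b a" using a b B(2) unfolding interval_in_def by auto
  hence a0: "a \<in> C" using Ceq b by blast
  have amax: "cc \<sqsubseteq>\<^bsub>L\<^esub> a" if "cc \<in> C" for cc using that Ceq unfolding interval_in_def by auto
  have jD: "msd (doubling L C)" by (rule d.msd_D[OF jL a0 amax])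
  have iso: "order_iso (doubling L C) M f" by fact
  have "lat M" unfolding lat_def using double.hyps(3) iso_bounds[OF iso dbl_bounds[OF dL]] by simp
  moreover have "msd M" by (rule iso_msd[OF iso jD])
  ultimately show ?case by simp
qed

lemma obtained_po: "obtained_by_doublings P M \<Longrightarrow> partial_order M"
  by (induction rule: obtained_by_doublings.induct) simp_all

lemma obtained_mono:
  assumes "obtained_by_doublings P M" "\<And>L C. partial_order L \<Longrightarrow> P L C \<Longrightarrow> Q L C"
  shows "obtained_by_doublings Q M"
  using assms(1)
proof (induction rule: obtained_by_doublings.induct)
  case (one M) thus ?case by (rule obtained_by_doublings.one)
next
  case (double L C M f)
  show ?case by (rule obtained_by_doublings.double[OF double.IH
      assms(2)[OF obtained_po[OF double.hyps(1)] double.hyps(2)] double.hyps(3,4)])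
qed

lemma interval_lower: "partial_order L \<Longrightarrow> is_interval L C \<Longrightarrow> lower_pseudo_interval L C"
proof -
  assume po: "partial_order L" and iv: "is_interval L C"
  interpret partial_order L by (rule po)
  obtain a b where ab: "a \<in> carrier L" "b \<in> carrier L" "a \<sqsubseteq>\<^bsub>L\<^esub> b" "C = interval_in L a b"
    using iv unfolding is_interval_def by blast
  have "convex_in L C" unfolding convex_in_def ab(4) interval_in_def
    by (auto; meson le_trans ab(1) ab(2))
  moreover have "{b} \<subseteq> {b' \<in> carrier L. a \<sqsubseteq>\<^bsub>L\<^esub> b'}" using ab by auto
  ultimately show ?thesis unfolding lower_pseudo_interval_def using ab by blast
qed

lemma interval_upper: "partial_order L \<Longrightarrow> is_interval L C \<Longrightarrow> upper_pseudo_interval L C"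
proof -
  assume po: "partial_order L" and iv: "is_interval L C"
  interpret partial_order L by (rule po)
  obtain a b where ab: "a \<in> carrier L" "b \<in> carrier L" "a \<sqsubseteq>\<^bsub>L\<^esub> b" "C = interval_in L a b"
    using iv unfolding is_interval_def by blast
  have "convex_in L C" unfolding convex_in_def ab(4) interval_in_def
    by (auto; meson le_trans ab(1) ab(2))
  moreover have "{a} \<subseteq> {a' \<in> carrier L. a' \<sqsubseteq>\<^bsub>L\<^esub> b}" using ab by auto
  ultimately show ?thesis unfolding upper_pseudo_interval_def using ab by blast
qed


locale flat = lattice L for L :: "'a gorder" (structure) +
  assumes fin: "finite (carrier L)" and ne: "carrier L \<noteq> {}"
begin

lemma meet_eq_left: "x \<in> carrier L \<Longrightarrow> y \<in> carrier L \<Longrightarrow> x \<sqsubseteq> y \<Longrightarrow> x \<sqinter> y = x"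
  by (rule le_antisym) (simp_all add: meet_left meet_le)

lemma meet_eq_right: "x \<in> carrier L \<Longrightarrow> y \<in> carrier L \<Longrightarrow> y \<sqsubseteq> x \<Longrightarrow> x \<sqinter> y = y"
  by (rule le_antisym) (simp_all add: meet_right meet_le)

lemma join_eq_right: "x \<in> carrier L \<Longrightarrow> y \<in> carrier L \<Longrightarrow> x \<sqsubseteq> y \<Longrightarrow> x \<squnion> y = y"
  by (rule le_antisym) (simp_all add: join_right join_le)

lemma join_eq_left: "x \<in> carrier L \<Longrightarrow> y \<in> carrier L \<Longrightarrow> y \<sqsubseteq> x \<Longrightarrow> x \<squnion> y = x"
  by (rule le_antisym) (simp_all add: join_left join_le)

lemma minimal_ex:
  assumes "finite S" "S \<noteq> {}" "S \<subseteq> carrier L"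
  shows "\<exists>m\<in>S. \<forall>x\<in>S. x \<sqsubseteq> m \<longrightarrow> x = m"
  using assms
proof (induction S rule: finite_ne_induct)
  case (singleton x) thus ?case by simp
next
  case (insert a F)
  then obtain m where m: "m \<in> F" "\<forall>x\<in>F. x \<sqsubseteq> m \<longrightarrow> x = m" by auto
  have ac: "a \<in> carrier L" and Fc: "F \<subseteq> carrier L" using insert.prems by auto
  have mc: "m \<in> carrier L" using m(1) Fc by auto
  show ?case
  proof (cases "a \<sqsubseteq> m")
    case True
    have "\<forall>x\<in>insert a F. x \<sqsubseteq> a \<longrightarrow> x = a"
    proof (intro ballI impI)
      fix x assume x: "x \<in> insert a F" "x \<sqsubseteq> a"
      show "x = a"
      proof (cases "x = a")
        case False
        hence xF: "x \<in> F" using x by simp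
        hence xc: "x \<in> carrier L" using Fc by auto
        have "x \<sqsubseteq> m" by (rule le_trans[OF x(2) True xc ac mc])
        hence "x = m" using m xF by blast
        hence "m \<sqsubseteq> a" using x by simp
        hence "a = m" using True le_antisym ac mc by blast
        thus ?thesis using \<open>x = m\<close> by simp
      qed simp
    qed
    thus ?thesis by blast
  next
    case False
    have "\<forall>x\<in>insert a F. x \<sqsubseteq> m \<longrightarrow> x = m" using m False by auto
    thus ?thesis using m(1) by blast
  qed
qed

lemma maximal_ex:
  assumes "finite S" "S \<noteq> {}" "S \<subseteq> carrier L"
  shows "\<exists>m\<in>S. \<forall>x\<in>S. m \<sqsubseteq> x \<longrightarrow> x = m"
  using assms
proof (induction S rule: finite_ne_induct)
  case (singleton x) thus ?case by simp
next
  case (insert a F)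
  then obtain m where m: "m \<in> F" "\<forall>x\<in>F. m \<sqsubseteq> x \<longrightarrow> x = m" by auto
  have ac: "a \<in> carrier L" and Fc: "F \<subseteq> carrier L" using insert.prems by auto
  have mc: "m \<in> carrier L" using m(1) Fc by auto
  show ?case
  proof (cases "m \<sqsubseteq> a")
    case True
    have "\<forall>x\<in>insert a F. a \<sqsubseteq> x \<longrightarrow> x = a"
    proof (intro ballI impI)
      fix x assume x: "x \<in> insert a F" "a \<sqsubseteq> x"
      show "x = a"
      proof (cases "x = a")
        case False
        hence xF: "x \<in> F" using x by simp
        hence xc: "x \<in> carrier L" using Fc by auto
        have "m \<sqsubseteq> x" by (rule le_trans[OF True x(2) mc ac xc])
        hence "x = m" using m xF by blast
        hence "a \<sqsubseteq> m" using x by simp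
        hence "a = m" using True le_antisym ac mc by blast
        thus ?thesis using \<open>x = m\<close> by simp
      qed simp
    qed
    thus ?thesis by blast
  next
    case False
    have "\<forall>x\<in>insert a F. m \<sqsubseteq> x \<longrightarrow> x = m" using m False by auto
    thus ?thesis using m(1) by blast
  qed
qed

lemma chain_least:
  assumes "is_chain L D" "S \<subseteq> D" "S \<noteq> {}" "finite S"
  shows "\<exists>m\<in>S. \<forall>x\<in>S. m \<sqsubseteq> x"
proof -
  have Sc: "S \<subseteq> carrier L" using assms unfolding is_chain_def by auto
  obtain m where m: "m \<in> S" "\<forall>x\<in>S. x \<sqsubseteq> m \<longrightarrow> x = m" using minimal_ex[OF assms(4,3) Sc] by blast
  have "\<forall>x\<in>S. m \<sqsubseteq> x"
  proof
    fix x assume x: "x \<in> S"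
    have "x \<sqsubseteq> m \<or> m \<sqsubseteq> x" using assms(1,2) x m(1) unfolding is_chain_def by blast
    thus "m \<sqsubseteq> x" using m x Sc by auto
  qed
  thus ?thesis using m(1) by blast
qed

lemma chain_greatest:
  assumes "is_chain L D" "S \<subseteq> D" "S \<noteq> {}" "finite S"
  shows "\<exists>m\<in>S. \<forall>x\<in>S. x \<sqsubseteq> m"
proof -
  have Sc: "S \<subseteq> carrier L" using assms unfolding is_chain_def by auto
  obtain m where m: "m \<in> S" "\<forall>x\<in>S. m \<sqsubseteq> x \<longrightarrow> x = m" using maximal_ex[OF assms(4,3) Sc] by blast
  have "\<forall>x\<in>S. x \<sqsubseteq> m"
  proof
    fix x assume x: "x \<in> S"
    have "x \<sqsubseteq> m \<or> m \<sqsubseteq> x" using assms(1,2) x m(1) unfolding is_chain_def by blast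
    thus "x \<sqsubseteq> m" using m x Sc by auto
  qed
  thus ?thesis using m(1) by blast
qed

lemma top_ex: "\<exists>t\<in>carrier L. \<forall>x\<in>carrier L. x \<sqsubseteq> t"
proof -
  obtain m where m: "m \<in> carrier L" "\<forall>x\<in>carrier L. m \<sqsubseteq> x \<longrightarrow> x = m"
    using maximal_ex[OF fin ne] by blast
  have "\<forall>x\<in>carrier L. x \<sqsubseteq> m"
  proof
    fix x assume x: "x \<in> carrier L"
    have "m \<sqsubseteq> x \<squnion> m" using join_right x m(1) by simp
    hence "x \<squnion> m = m" using m x by simp
    thus "x \<sqsubseteq> m" using join_left[OF x m(1)] by simp
  qed
  thus ?thesis using m(1) by blast
qed

lemma bot_ex: "\<exists>t\<in>carrier L. \<forall>x\<in>carrier L. t \<sqsubseteq> x"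
proof -
  obtain m where m: "m \<in> carrier L" "\<forall>x\<in>carrier L. x \<sqsubseteq> m \<longrightarrow> x = m"
    using minimal_ex[OF fin ne] by blast
  have "\<forall>x\<in>carrier L. m \<sqsubseteq> x"
  proof
    fix x assume x: "x \<in> carrier L"
    have "x \<sqinter> m \<sqsubseteq> m" using meet_right x m(1) by simp
    hence "x \<sqinter> m = m" using m x by simp
    thus "m \<sqsubseteq> x" using meet_left[OF x m(1)] by simp
  qed
  thus ?thesis using m(1) by blast
qed

lemma maxchain_top:
  assumes "maximal_chain L C" "t \<in> carrier L" "\<forall>x\<in>carrier L. x \<sqsubseteq> t"
  shows "t \<in> C"
proof -
  have ch: "is_chain L C" using assms(1) unfolding maximal_chain_def by simp
  hence "is_chain L (insert t C)" using assms(2,3) unfolding is_chain_def by auto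
  hence "insert t C = C" using assms(1) unfolding maximal_chain_def by blast
  thus ?thesis by blast
qed

lemma maxchain_bot:
  assumes "maximal_chain L C" "t \<in> carrier L" "\<forall>x\<in>carrier L. t \<sqsubseteq> x"
  shows "t \<in> C"
proof -
  have ch: "is_chain L C" using assms(1) unfolding maximal_chain_def by simp
  hence "is_chain L (insert t C)" using assms(2,3) unfolding is_chain_def by auto
  hence "insert t C = C" using assms(1) unfolding maximal_chain_def by blast
  thus ?thesis by blast
qed

lemma chain_finite: "is_chain L D \<Longrightarrow> finite D"
  using fin unfolding is_chain_def by (auto intro: finite_subset)

lemma maxchain_cover:
  assumes mc: "maximal_chain L C" and p: "p \<in> C" and c: "c \<in> C" and pc: "p \<sqsubseteq> c" "p \<noteq> c"
    and pmax: "\<forall>d\<in>C. d \<sqsubseteq> c \<and> d \<noteq> c \<longrightarrow> d \<sqsubseteq> p"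
    and z: "z \<in> carrier L" "p \<sqsubseteq> z" "z \<sqsubseteq> c"
  shows "z = p \<or> z = c"
proof -
  have ch: "is_chain L C" using mc unfolding maximal_chain_def by simp
  have Cc: "C \<subseteq> carrier L" using ch unfolding is_chain_def by simp
  have pcar: "p \<in> carrier L" and ccar: "c \<in> carrier L" using p c Cc by auto
  have "is_chain L (insert z C)"
    unfolding is_chain_def
  proof (intro conjI ballI)
    show "insert z C \<subseteq> carrier L" using Cc z by auto
  next
    fix x y assume x: "x \<in> insert z C" and y: "y \<in> insert z C"
    have cmp: "d \<sqsubseteq> z \<or> z \<sqsubseteq> d" if d: "d \<in> C" for d
    proof -
      have dc: "d \<in> carrier L" using d Cc by auto
      have "d \<sqsubseteq> c \<or> c \<sqsubseteq> d" using ch d c unfolding is_chain_def by blast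
      thus ?thesis
      proof
        assume "c \<sqsubseteq> d" thus ?thesis using le_trans[OF z(3) _ z(1) ccar dc] by blast
      next
        assume dc': "d \<sqsubseteq> c"
        show ?thesis
        proof (cases "d = c")
          case True thus ?thesis using z by simp
        next
          case False
          hence "d \<sqsubseteq> p" using pmax d dc' by blast
          thus ?thesis using le_trans[OF _ z(2) dc pcar z(1)] by blast
        qed
      qed
    qed
    show "x \<sqsubseteq> y \<or> y \<sqsubseteq> x"
    proof (cases "x = z")
      case True
      show ?thesis
      proof (cases "y = z")
        case True thus ?thesis using \<open>x = z\<close> z by simp
      next
        case False thus ?thesis using y cmp \<open>x = z\<close> by blast
      qed
    next
      case False
      hence xC: "x \<in> C" using x by simp
      show ?thesis
      proof (cases "y = z")
        case True thus ?thesis using xC cmp by blast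
      next
        case False thus ?thesis using y xC ch unfolding is_chain_def by blast
      qed
    qed
  qed
  hence "insert z C = C" using mc unfolding maximal_chain_def by blast
  hence zC: "z \<in> C" by blast
  show ?thesis
  proof (cases "z = c")
    case False
    hence "z \<sqsubseteq> p" using pmax zC z(3) by blast
    thus ?thesis using le_antisym[OF _ z(2) z(1) pcar] by blast
  qed simp
qed

lemma chains_fin: "finite {card D | D. is_chain L D}"
proof -
  have "{card D | D. is_chain L D} \<subseteq> card ` Pow (carrier L)" unfolding is_chain_def by auto
  thus ?thesis using fin by (rule finite_subset[OF _ finite_imageI[OF finite_Pow_iff[THEN iffD2]]])
qed

lemma length_ge: "is_chain L D \<Longrightarrow> card D - 1 \<le> lattice_length L"
proof -
  assume "is_chain L D"
  hence "card D \<le> Max {card D | D. is_chain L D}" using chains_fin by (intro Max_ge) auto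
  thus ?thesis unfolding lattice_length_def by simp
qed

lemma length_ach: "\<exists>D. is_chain L D \<and> card D = Max {card D | D. is_chain L D}"
proof -
  have "is_chain L {}" unfolding is_chain_def by simp
  hence "{card D | D. is_chain L D} \<noteq> {}" by blast
  from Max_in[OF chains_fin this] show ?thesis by auto
qed

lemma ji_intro:
  assumes j: "j \<in> carrier L" and nb: "\<not> (\<forall>x\<in>carrier L. j \<sqsubseteq> x)"
    and H: "\<And>a b. a \<in> carrier L \<Longrightarrow> b \<in> carrier L \<Longrightarrow> a \<sqsubseteq> j \<Longrightarrow> b \<sqsubseteq> j \<Longrightarrow> a \<noteq> j \<Longrightarrow> b \<noteq> j
       \<Longrightarrow> \<not> j \<sqsubseteq> a \<squnion> b"
  shows "join_irreducible L j"
  unfolding join_irreducible_def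
proof (intro conjI ballI impI j nb)
  fix a b assume a: "a \<in> carrier L" and b: "b \<in> carrier L" and e: "j = a \<squnion> b"
  show "j = a \<or> j = b"
  proof (rule ccontr)
    assume "\<not> (j = a \<or> j = b)"
    moreover have "a \<sqsubseteq> j" "b \<sqsubseteq> j" using e join_left[OF a b] join_right[OF a b] by simp_all
    ultimately have "\<not> j \<sqsubseteq> a \<squnion> b" using H a b by metis
    thus False using e j by simp
  qed
qed

definition pset :: "'a set \<Rightarrow> 'a \<Rightarrow> 'a set" where
  "pset D d = {z \<in> carrier L. z \<sqsubseteq> d \<and> (\<forall>d'\<in>D. d' \<sqsubseteq> d \<and> d' \<noteq> d \<longrightarrow> \<not> z \<sqsubseteq> d')}"

definition psi :: "'a set \<Rightarrow> 'a \<Rightarrow> 'a" where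
  "psi D d = (SOME j. j \<in> pset D d \<and> (\<forall>z\<in>pset D d. z \<sqsubseteq> j \<longrightarrow> z = j))"

definition nonmin :: "'a set \<Rightarrow> 'a set" where
  "nonmin D = {d \<in> D. \<exists>d'\<in>D. d' \<sqsubseteq> d \<and> d' \<noteq> d}"

lemma psi_props:
  assumes ch: "is_chain L D" and d: "d \<in> nonmin D"
  shows "psi D d \<in> pset D d" "\<forall>z\<in>pset D d. z \<sqsubseteq> psi D d \<longrightarrow> z = psi D d"
proof -
  have dD: "d \<in> D" using d unfolding nonmin_def by simp
  have dc: "d \<in> carrier L" using ch dD unfolding is_chain_def by auto
  have Dc: "D \<subseteq> carrier L" using ch unfolding is_chain_def by auto
  have "d \<in> pset D d" unfolding pset_def
  proof (intro CollectI conjI ballI impI dc)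
    show "d \<sqsubseteq> d" using dc by simp
  next
    fix d' assume "d' \<in> D" "d' \<sqsubseteq> d \<and> d' \<noteq> d"
    thus "\<not> d \<sqsubseteq> d'" using le_antisym dc Dc by blast
  qed
  hence ne: "pset D d \<noteq> {}" by blast
  have pc: "pset D d \<subseteq> carrier L" unfolding pset_def by auto
  have "finite (pset D d)" using fin pc by (rule finite_subset[rotated])
  from minimal_ex[OF this ne pc] have "\<exists>j. j \<in> pset D d \<and> (\<forall>z\<in>pset D d. z \<sqsubseteq> j \<longrightarrow> z = j)" by blast
  from someI_ex[OF this] show "psi D d \<in> pset D d" "\<forall>z\<in>pset D d. z \<sqsubseteq> psi D d \<longrightarrow> z = psi D d"
    unfolding psi_def by blast+
qed

lemma psi_ji:
  assumes ch: "is_chain L D" and d: "d \<in> nonmin D"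
  shows "join_irreducible L (psi D d)"
proof -
  let ?j = "psi D d"
  have jp: "?j \<in> pset D d" and jm: "\<forall>z\<in>pset D d. z \<sqsubseteq> ?j \<longrightarrow> z = ?j" using psi_props[OF ch d] by auto
  have Dc: "D \<subseteq> carrier L" using ch unfolding is_chain_def by auto
  have dD: "d \<in> D" using d unfolding nonmin_def by simp
  have dc: "d \<in> carrier L" using dD Dc by auto
  have jc: "?j \<in> carrier L" and jd: "?j \<sqsubseteq> d"
    and jn: "\<forall>d'\<in>D. d' \<sqsubseteq> d \<and> d' \<noteq> d \<longrightarrow> \<not> ?j \<sqsubseteq> d'" using jp unfolding pset_def by auto
  obtain d0 where d0: "d0 \<in> D" "d0 \<sqsubseteq> d" "d0 \<noteq> d" using d unfolding nonmin_def by auto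
  have below: "\<exists>d1\<in>D. d1 \<sqsubseteq> d \<and> d1 \<noteq> d \<and> a \<sqsubseteq> d1"
    if a: "a \<in> carrier L" "a \<sqsubseteq> ?j" "a \<noteq> ?j" for a
  proof (rule ccontr)
    assume "\<not> ?thesis"
    hence "a \<in> pset D d" unfolding pset_def using a le_trans[OF a(2) jd a(1) jc dc] by blast
    thus False using jm a by blast
  qed
  show ?thesis
  proof (rule ji_intro[OF jc])
    show "\<not> (\<forall>x\<in>carrier L. ?j \<sqsubseteq> x)" using jn d0 Dc by blast
  next
    fix a b assume a: "a \<in> carrier L" and b: "b \<in> carrier L" and h: "a \<sqsubseteq> ?j" "b \<sqsubseteq> ?j" "a \<noteq> ?j" "b \<noteq> ?j"
    obtain d1 where d1: "d1 \<in> D" "d1 \<sqsubseteq> d" "d1 \<noteq> d" "a \<sqsubseteq> d1" using below[OF a h(1) h(3)] by blast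
    obtain d2 where d2: "d2 \<in> D" "d2 \<sqsubseteq> d" "d2 \<noteq> d" "b \<sqsubseteq> d2" using below[OF b h(2) h(4)] by blast
    have d1c: "d1 \<in> carrier L" and d2c: "d2 \<in> carrier L" using d1 d2 Dc by auto
    have "\<exists>e\<in>D. e \<sqsubseteq> d \<and> e \<noteq> d \<and> a \<sqsubseteq> e \<and> b \<sqsubseteq> e"
    proof -
      have "d1 \<sqsubseteq> d2 \<or> d2 \<sqsubseteq> d1" using ch d1(1) d2(1) unfolding is_chain_def by blast
      thus ?thesis
      proof
        assume "d1 \<sqsubseteq> d2"
        hence "a \<sqsubseteq> d2" using le_trans[OF d1(4) _ a d1c d2c] by blast
        thus ?thesis using d2 by blast
      next
        assume "d2 \<sqsubseteq> d1"
        hence "b \<sqsubseteq> d1" using le_trans[OF d2(4) _ b d2c d1c] by blast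
        thus ?thesis using d1 by blast
      qed
    qed
    then obtain e where e: "e \<in> D" "e \<sqsubseteq> d" "e \<noteq> d" "a \<sqsubseteq> e" "b \<sqsubseteq> e" by blast
    have ec: "e \<in> carrier L" using e Dc by auto
    have abe: "a \<squnion> b \<sqsubseteq> e" by (rule join_le[OF e(4,5) a b ec])
    show "\<not> ?j \<sqsubseteq> a \<squnion> b"
    proof
      assume "?j \<sqsubseteq> a \<squnion> b"
      hence "?j \<sqsubseteq> e" using le_trans[OF _ abe jc _ ec] a b by simp
      thus False using jn e by blast
    qed
  qed
qed

lemma psi_inj:
  assumes ch: "is_chain L D"
  shows "inj_on (psi D) (nonmin D)"
proof (rule inj_onI)
  fix d1 d2 assume d1: "d1 \<in> nonmin D" and d2: "d2 \<in> nonmin D" and e: "psi D d1 = psi D d2"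
  show "d1 = d2"
  proof (rule ccontr)
    assume ne: "d1 \<noteq> d2"
    have D1: "d1 \<in> D" and D2: "d2 \<in> D" using d1 d2 unfolding nonmin_def by auto
    have "d1 \<sqsubseteq> d2 \<or> d2 \<sqsubseteq> d1" using ch D1 D2 unfolding is_chain_def by blast
    thus False
    proof
      assume le: "d1 \<sqsubseteq> d2"
      have "psi D d1 \<sqsubseteq> d1" using psi_props(1)[OF ch d1] unfolding pset_def by auto
      moreover have "\<not> psi D d2 \<sqsubseteq> d1" using psi_props(1)[OF ch d2] D1 le ne unfolding pset_def by auto
      ultimately show False using e by simp
    next
      assume le: "d2 \<sqsubseteq> d1"
      have "psi D d2 \<sqsubseteq> d2" using psi_props(1)[OF ch d2] unfolding pset_def by auto
      moreover have "\<not> psi D d1 \<sqsubseteq> d2" using psi_props(1)[OF ch d1] D2 le ne unfolding pset_def by auto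
      ultimately show False using e by simp
    qed
  qed
qed

lemma card_nonmin: assumes ch: "is_chain L D" shows "card D \<le> card (nonmin D) + 1"
proof (cases "D = {}")
  case True thus ?thesis by simp
next
  case False
  have fD: "finite D" by (rule chain_finite[OF ch])
  obtain m where m: "m \<in> D" "\<forall>x\<in>D. m \<sqsubseteq> x" using chain_least[OF ch subset_refl False fD] by blast
  have "D \<subseteq> insert m (nonmin D)" unfolding nonmin_def using m by auto
  hence "card D \<le> card (insert m (nonmin D))"
    by (rule card_mono[rotated]) (simp add: nonmin_def fD)
  also have "\<dots> \<le> card (nonmin D) + 1" by (simp add: card_insert_if nonmin_def fD)
  finally show ?thesis .
qed

lemma J_fin: "finite {j. join_irreducible L j}"
  using fin by (rule finite_subset[rotated]) (auto simp: join_irreducible_def)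

lemma chain_le_J: assumes ch: "is_chain L D" shows "card D - 1 \<le> card {j. join_irreducible L j}"
proof -
  have "psi D ` nonmin D \<subseteq> {j. join_irreducible L j}" using psi_ji[OF ch] by auto
  hence "card (psi D ` nonmin D) \<le> card {j. join_irreducible L j}" using J_fin by (rule card_mono[rotated])
  moreover have "card (psi D ` nonmin D) = card (nonmin D)" using card_image[OF psi_inj[OF ch]] .
  ultimately show ?thesis using card_nonmin[OF ch] by simp
qed

lemma length_le_J: "lattice_length L \<le> card {j. join_irreducible L j}"
proof -
  obtain D where D: "is_chain L D" "card D = Max {card D | D. is_chain L D}" using length_ach by blast
  have "lattice_length L = card D - 1" unfolding lattice_length_def using D(2) by simp
  thus ?thesis using chain_le_J[OF D(1)] by simp
qed

lemma pred_ex: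
  assumes ch: "is_chain L C" and c: "c \<in> C" and ex: "\<exists>d\<in>C. d \<sqsubseteq> c \<and> d \<noteq> c"
  shows "\<exists>p\<in>C. p \<sqsubseteq> c \<and> p \<noteq> c \<and> (\<forall>d\<in>C. d \<sqsubseteq> c \<and> d \<noteq> c \<longrightarrow> d \<sqsubseteq> p)"
proof -
  let ?S = "{d \<in> C. d \<sqsubseteq> c \<and> d \<noteq> c}"
  have "?S \<noteq> {}" using ex by blast
  moreover have "finite ?S" using chain_finite[OF ch] by simp
  ultimately obtain p where "p \<in> ?S" "\<forall>x\<in>?S. x \<sqsubseteq> p" using chain_greatest[OF ch, of ?S] by blast
  thus ?thesis by blast
qed

theorem part1:
  assumes JSD: "\<And>x y z. x \<in> carrier L \<Longrightarrow> y \<in> carrier L \<Longrightarrow> z \<in> carrier L \<Longrightarrow>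
      x \<squnion> y = x \<squnion> z \<Longrightarrow> x \<squnion> (y \<sqinter> z) = x \<squnion> y"
    and LM: "left_modular L"
  shows "join_extremal L"
proof -
  obtain C where mc: "maximal_chain L C" and lm: "\<forall>a\<in>C. left_modular_elem L a"
    using LM unfolding left_modular_def by blast
  have ch: "is_chain L C" using mc unfolding maximal_chain_def by simp
  have Cc: "C \<subseteq> carrier L" using ch unfolding is_chain_def by simp
  have fC: "finite C" by (rule chain_finite[OF ch])
  obtain t where t: "t \<in> carrier L" "\<forall>x\<in>carrier L. x \<sqsubseteq> t" using top_ex by blast
  obtain bt where bt: "bt \<in> carrier L" "\<forall>x\<in>carrier L. bt \<sqsubseteq> x" using bot_ex by blast
  have tC: "t \<in> C" by (rule maxchain_top[OF mc t])
  have btC: "bt \<in> C" by (rule maxchain_bot[OF mc bt])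
  let ?J = "{j. join_irreducible L j}"
  define phi where "phi j = (SOME c. c \<in> C \<and> j \<sqsubseteq> c \<and> (\<forall>c'\<in>C. j \<sqsubseteq> c' \<longrightarrow> c \<sqsubseteq> c'))" for j
  have phi: "phi j \<in> C \<and> j \<sqsubseteq> phi j \<and> (\<forall>c'\<in>C. j \<sqsubseteq> c' \<longrightarrow> phi j \<sqsubseteq> c')" if j: "j \<in> ?J" for j
  proof -
    have jc: "j \<in> carrier L" using j unfolding join_irreducible_def by simp
    let ?S = "{c \<in> C. j \<sqsubseteq> c}"
    have "t \<in> ?S" using tC t jc by simp
    hence "?S \<noteq> {}" by blast
    moreover have "finite ?S" using fC by simp
    ultimately obtain m where "m \<in> ?S" "\<forall>x\<in>?S. m \<sqsubseteq> x" using chain_least[OF ch, of ?S] by blast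
    hence "\<exists>c. c \<in> C \<and> j \<sqsubseteq> c \<and> (\<forall>c'\<in>C. j \<sqsubseteq> c' \<longrightarrow> c \<sqsubseteq> c')" by blast
    from someI_ex[OF this] show ?thesis unfolding phi_def .
  qed
  have notbt: "phi j \<noteq> bt" if j: "j \<in> ?J" for j
  proof
    assume e: "phi j = bt"
    have jc: "j \<in> carrier L" using j unfolding join_irreducible_def by simp
    have "j \<sqsubseteq> bt" using phi[OF j] e by simp
    hence "\<forall>x\<in>carrier L. j \<sqsubseteq> x" using bt jc le_trans[OF _ _ jc bt(1)] by blast
    thus False using j unfolding join_irreducible_def by simp
  qed
  have inj: "inj_on phi ?J"
  proof (rule inj_onI)
    fix j j' assume j: "j \<in> ?J" and j': "j' \<in> ?J" and e: "phi j = phi j'"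
    define c where "c = phi j"
    have cC: "c \<in> C" using phi[OF j] c_def by simp
    have cc: "c \<in> carrier L" using cC Cc by auto
    have "bt \<sqsubseteq> c" "bt \<noteq> c" using bt cc notbt[OF j] c_def by auto
    then obtain p where p: "p \<in> C" "p \<sqsubseteq> c" "p \<noteq> c" "\<forall>d\<in>C. d \<sqsubseteq> c \<and> d \<noteq> c \<longrightarrow> d \<sqsubseteq> p"
      using pred_ex[OF ch cC] btC by blast
    have pc: "p \<in> carrier L" using p(1) Cc by auto
    have lmp: "left_modular_elem L p" using lm p(1) by blast
    have cover: "z = p \<or> z = c" if "z \<in> carrier L" "p \<sqsubseteq> z" "z \<sqsubseteq> c" for z
      by (rule maxchain_cover[OF mc p(1) cC p(2,3,4) that])
    have key: "\<not> k \<sqsubseteq> p \<and> (\<forall>z\<in>carrier L. z \<sqsubseteq> k \<and> z \<noteq> k \<longrightarrow> z \<sqsubseteq> p) \<and> k \<squnion> p = c"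
      if k: "k \<in> ?J" and kc: "phi k = c" for k
    proof -
      have kcar: "k \<in> carrier L" using k unfolding join_irreducible_def by simp
      have kji: "\<forall>a\<in>carrier L. \<forall>b\<in>carrier L. k = a \<squnion> b \<longrightarrow> k = a \<or> k = b"
        using k unfolding join_irreducible_def by simp
      have klc: "k \<sqsubseteq> c" using phi[OF k] kc by simp
      have a: "\<not> k \<sqsubseteq> p"
      proof
        assume "k \<sqsubseteq> p"
        hence "c \<sqsubseteq> p" using phi[OF k] kc p(1) by auto
        thus False using le_antisym[OF p(2) _ pc cc] p(3) by blast
      qed
      have b: "z \<sqsubseteq> p" if z: "z \<in> carrier L" "z \<sqsubseteq> k" "z \<noteq> k" for z
      proof -
        have "z \<sqsubset> k" using z lless_eq by simp
        hence E: "(z \<squnion> p) \<sqinter> k = z \<squnion> (p \<sqinter> k)" using lmp z(1) kcar unfolding left_modular_elem_def by blast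
        have pkc: "p \<sqinter> k \<in> carrier L" using pc kcar by simp
        have pk1: "p \<sqinter> k \<sqsubseteq> k" by (rule meet_right[OF pc kcar])
        have pk2: "p \<sqinter> k \<noteq> k"
        proof
          assume "p \<sqinter> k = k"
          hence "k \<sqsubseteq> p" using meet_left[OF pc kcar] by simp
          thus False using a by simp
        qed
        have "z \<squnion> (p \<sqinter> k) \<noteq> k" using kji z(1) pkc z(3) pk2 by metis
        hence ne: "(z \<squnion> p) \<sqinter> k \<noteq> k" using E by simp
        have zpc: "z \<squnion> p \<in> carrier L" using z(1) pc by simp
        have nk: "\<not> k \<sqsubseteq> z \<squnion> p"
        proof
          assume "k \<sqsubseteq> z \<squnion> p"
          hence "(z \<squnion> p) \<sqinter> k = k" by (rule meet_eq_right[OF zpc kcar])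
          thus False using ne by simp
        qed
        have zc: "z \<sqsubseteq> c" by (rule le_trans[OF z(2) klc z(1) kcar cc])
        have "p \<sqsubseteq> z \<squnion> p" by (rule join_right[OF z(1) pc])
        moreover have "z \<squnion> p \<sqsubseteq> c" by (rule join_le[OF zc p(2) z(1) pc cc])
        ultimately have "z \<squnion> p = p \<or> z \<squnion> p = c" using cover zpc by blast
        thus ?thesis
        proof
          assume "z \<squnion> p = p" thus ?thesis using join_left[OF z(1) pc] by simp
        next
          assume "z \<squnion> p = c" thus ?thesis using nk klc by simp
        qed
      qed
      have kpc: "k \<squnion> p \<in> carrier L" using kcar pc by simp
      have "p \<sqsubseteq> k \<squnion> p" by (rule join_right[OF kcar pc])
      moreover have "k \<squnion> p \<sqsubseteq> c" by (rule join_le[OF klc p(2) kcar pc cc])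
      ultimately have "k \<squnion> p = p \<or> k \<squnion> p = c" using cover kpc by blast
      moreover have "k \<squnion> p \<noteq> p" using join_left[OF kcar pc] a by auto
      ultimately have "k \<squnion> p = c" by simp
      thus ?thesis using a b by blast
    qed
    have K1: "\<not> j \<sqsubseteq> p" "\<forall>z\<in>carrier L. z \<sqsubseteq> j \<and> z \<noteq> j \<longrightarrow> z \<sqsubseteq> p" "j \<squnion> p = c"
      using key[OF j] c_def by auto
    have K2: "\<not> j' \<sqsubseteq> p" "\<forall>z\<in>carrier L. z \<sqsubseteq> j' \<and> z \<noteq> j' \<longrightarrow> z \<sqsubseteq> p" "j' \<squnion> p = c"
      using key[OF j'] c_def e by auto
    have jc: "j \<in> carrier L" and jc': "j' \<in> carrier L" using j j' unfolding join_irreducible_def by auto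
    have "p \<squnion> j = p \<squnion> j'" using K1(3) K2(3) join_comm by metis
    hence J1: "p \<squnion> (j \<sqinter> j') = p \<squnion> j" by (rule JSD[OF pc jc jc'])
    have J2: "p \<squnion> (j \<sqinter> j') = c" using J1 K1(3) join_comm by metis
    show "j = j'"
    proof (rule ccontr)
      assume nj: "j \<noteq> j'"
      have mc': "j \<sqinter> j' \<in> carrier L" using jc jc' by simp
      show False
      proof (cases "j \<sqinter> j' = j")
        case True
        hence "j \<sqsubseteq> j'" using meet_right[OF jc jc'] by simp
        hence "j \<sqsubseteq> p" using K2(2) jc nj by blast
        thus False using K1(1) by simp
      next
        case False
        hence "j \<sqinter> j' \<sqsubseteq> p" using K1(2) mc' meet_left[OF jc jc'] by blast
        hence "p \<squnion> (j \<sqinter> j') = p" by (rule join_eq_left[OF pc mc'])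
        thus False using J2 p(3) by simp
      qed
    qed
  qed
  have sub: "phi ` ?J \<subseteq> C - {bt}" using phi notbt by auto
  have "card ?J = card (phi ` ?J)" using card_image[OF inj] by simp
  also have "\<dots> \<le> card (C - {bt})" using sub fC by (intro card_mono) auto
  also have "\<dots> = card C - 1" using btC fC by simp
  also have "\<dots> \<le> lattice_length L" by (rule length_ge[OF ch])
  finally show ?thesis unfolding join_extremal_def using length_le_J by simp
qed

theorem part3:
  assumes MSD: "\<And>x y z. x \<in> carrier L \<Longrightarrow> y \<in> carrier L \<Longrightarrow> z \<in> carrier L \<Longrightarrow>
      x \<sqinter> y = x \<sqinter> z \<Longrightarrow> x \<sqinter> (y \<squnion> z) = x \<sqinter> y"
    and JE: "join_extremal L"
  shows "left_modular L"
proof -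
  obtain D0 where D0: "is_chain L D0" "card D0 = Max {card D | D. is_chain L D}" using length_ach by blast
  have fD0: "finite D0" by (rule chain_finite[OF D0(1)])
  have D0c: "D0 \<subseteq> carrier L" using D0(1) unfolding is_chain_def by simp
  have mc: "maximal_chain L D0" unfolding maximal_chain_def
  proof (intro conjI allI impI D0(1))
    fix D assume h: "is_chain L D \<and> D0 \<subseteq> D"
    have "card D \<le> Max {card D | D. is_chain L D}" using h chains_fin by (intro Max_ge) auto
    hence cle: "card D \<le> card D0" using D0(2) by simp
    have "D0 \<subseteq> D" using h by simp
    from card_seteq[OF chain_finite[of D] this cle] h show "D = D0" by auto
  qed
  let ?J = "{j. join_irreducible L j}"
  have len: "lattice_length L = card D0 - 1" unfolding lattice_length_def using D0(2) by simp
  have sub: "psi D0 ` nonmin D0 \<subseteq> ?J" using psi_ji[OF D0(1)] by auto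
  have "card (psi D0 ` nonmin D0) = card (nonmin D0)" using card_image[OF psi_inj[OF D0(1)]] .
  moreover have "card (nonmin D0) \<ge> card ?J" using card_nonmin[OF D0(1)] len JE
    unfolding join_extremal_def by simp
  ultimately have Jeq: "psi D0 ` nonmin D0 = ?J" using card_seteq[OF J_fin sub] by simp
  have "\<forall>x\<in>D0. left_modular_elem L x"
  proof
    fix x assume xD: "x \<in> D0"
    have xc: "x \<in> carrier L" using xD D0c by auto
    show "left_modular_elem L x" unfolding left_modular_elem_def
    proof (intro conjI ballI impI xc)
      fix b y assume bc: "b \<in> carrier L" and yc: "y \<in> carrier L" and "b \<sqsubset> y"
      hence bly: "b \<sqsubseteq> y" using lless_eq by simp
      define u where "u = (b \<squnion> x) \<sqinter> y"
      define v where "v = b \<squnion> (x \<sqinter> y)"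
      have bxc: "b \<squnion> x \<in> carrier L" using bc xc by simp
      have xyc: "x \<sqinter> y \<in> carrier L" using xc yc by simp
      have uc: "u \<in> carrier L" using bxc yc u_def by simp
      have vc: "v \<in> carrier L" using bc xyc v_def by simp
      have bu: "b \<sqsubseteq> u" unfolding u_def by (rule meet_le[OF join_left[OF bc xc] bly bxc yc bc])
      have xbx: "x \<sqsubseteq> b \<squnion> x" by (rule join_right[OF bc xc])
      have xyu: "x \<sqinter> y \<sqsubseteq> u" unfolding u_def
        by (rule meet_le[OF le_trans[OF meet_left[OF xc yc] xbx xyc xc bxc] meet_right[OF xc yc] bxc yc xyc])
      have vu: "v \<sqsubseteq> u" unfolding v_def by (rule join_le[OF bu xyu bc xyc uc])
      show "(b \<squnion> x) \<sqinter> y = b \<squnion> (x \<sqinter> y)"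
      proof (rule ccontr)
        assume "(b \<squnion> x) \<sqinter> y \<noteq> b \<squnion> (x \<sqinter> y)"
        hence uv: "u \<noteq> v" using u_def v_def by simp
        let ?S = "{z \<in> carrier L. z \<sqsubseteq> u \<and> \<not> z \<sqsubseteq> v}"
        have "u \<in> ?S" using uc uv vu le_antisym[OF vu _ vc uc] by auto
        hence "?S \<noteq> {}" by blast
        moreover have "finite ?S" using fin by simp
        ultimately obtain j where j: "j \<in> ?S" "\<forall>z\<in>?S. z \<sqsubseteq> j \<longrightarrow> z = j"
          using minimal_ex[of ?S] by blast
        have jc: "j \<in> carrier L" and ju: "j \<sqsubseteq> u" and jv: "\<not> j \<sqsubseteq> v" using j(1) by auto
        have jb: "z \<sqsubseteq> v" if z: "z \<in> carrier L" "z \<sqsubseteq> j" "z \<noteq> j" for z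
        proof (rule ccontr)
          assume "\<not> z \<sqsubseteq> v"
          moreover have "z \<sqsubseteq> u" by (rule le_trans[OF z(2) ju z(1) jc uc])
          ultimately have "z \<in> ?S" using z(1) by simp
          thus False using j(2) z by blast
        qed
        have jji: "join_irreducible L j"
        proof (rule ji_intro[OF jc])
          show "\<not> (\<forall>x\<in>carrier L. j \<sqsubseteq> x)" using jv vc by blast
        next
          fix a1 a2 assume a: "a1 \<in> carrier L" "a2 \<in> carrier L" "a1 \<sqsubseteq> j" "a2 \<sqsubseteq> j" "a1 \<noteq> j" "a2 \<noteq> j"
          have "a1 \<squnion> a2 \<sqsubseteq> v" by (rule join_le[OF jb[OF a(1,3,5)] jb[OF a(2,4,6)] a(1,2) vc])
          moreover have "a1 \<squnion> a2 \<in> carrier L" using a(1,2) by simp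
          ultimately show "\<not> j \<sqsubseteq> a1 \<squnion> a2" using jv le_trans[OF _ _ jc _ vc] by blast
        qed
        then obtain c where cn: "c \<in> nonmin D0" and jpsi: "j = psi D0 c" using Jeq by blast
        have cD: "c \<in> D0" using cn unfolding nonmin_def by simp
        have cc: "c \<in> carrier L" using cD D0c by auto
        have jp: "j \<in> pset D0 c" and jm: "\<forall>z\<in>pset D0 c. z \<sqsubseteq> j \<longrightarrow> z = j"
          using psi_props[OF D0(1) cn] jpsi by auto
        have jlc: "j \<sqsubseteq> c" and jn: "\<forall>d'\<in>D0. d' \<sqsubseteq> c \<and> d' \<noteq> c \<longrightarrow> \<not> j \<sqsubseteq> d'"
          using jp unfolding pset_def by auto
        have jx: "\<not> j \<sqsubseteq> x"
        proof
          assume "j \<sqsubseteq> x"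
          moreover have "j \<sqsubseteq> y" using le_trans[OF ju _ jc uc yc] meet_right[OF bxc yc] u_def by simp
          ultimately have "j \<sqsubseteq> x \<sqinter> y" using meet_le[OF _ _ xc yc jc] by simp
          moreover have "x \<sqinter> y \<sqsubseteq> v" unfolding v_def by (rule join_right[OF bc xyc])
          ultimately show False using jv le_trans[OF _ _ jc xyc vc] by blast
        qed
        have "x \<sqsubseteq> c \<or> c \<sqsubseteq> x" using D0(1) xD cD unfolding is_chain_def by blast
        moreover have "\<not> c \<sqsubseteq> x" using jx le_trans[OF jlc _ jc cc xc] by blast
        ultimately have xlc: "x \<sqsubseteq> c" and xnc: "x \<noteq> c" using cc by auto
        obtain p where p: "p \<in> D0" "p \<sqsubseteq> c" "p \<noteq> c" "\<forall>d\<in>D0. d \<sqsubseteq> c \<and> d \<noteq> c \<longrightarrow> d \<sqsubseteq> p"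
          using pred_ex[OF D0(1) cD] xD xlc xnc by blast
        have pc: "p \<in> carrier L" using p(1) D0c by auto
        have xp: "x \<sqsubseteq> p" using p(4) xD xlc xnc by blast
        have jnp: "\<not> j \<sqsubseteq> p" using jn p by blast
        have bp: "z \<sqsubseteq> p" if z: "z \<in> carrier L" "z \<sqsubseteq> j" "z \<noteq> j" for z
        proof -
          have zc: "z \<sqsubseteq> c" by (rule le_trans[OF z(2) jlc z(1) jc cc])
          have "z \<notin> pset D0 c" using jm z by blast
          then obtain d' where d': "d' \<in> D0" "d' \<sqsubseteq> c" "d' \<noteq> c" "z \<sqsubseteq> d'"
            using z(1) zc unfolding pset_def by blast
          have "d' \<sqsubseteq> p" using p(4) d' by blast
          thus ?thesis using le_trans[OF d'(4) _ z(1) _ pc] d'(1) D0c by blast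
        qed
        have vjc: "v \<sqinter> j \<in> carrier L" and pjc: "p \<sqinter> j \<in> carrier L" using vc pc jc by simp_all
        have vj1: "v \<sqinter> j \<sqsubseteq> j" by (rule meet_right[OF vc jc])
        have vj2: "v \<sqinter> j \<noteq> j" using meet_left[OF vc jc] jv by auto
        have pj1: "p \<sqinter> j \<sqsubseteq> j" by (rule meet_right[OF pc jc])
        have pj2: "p \<sqinter> j \<noteq> j" using meet_left[OF pc jc] jnp by auto
        have "v \<sqinter> j \<sqsubseteq> p \<sqinter> j" by (rule meet_le[OF bp[OF vjc vj1 vj2] vj1 pc jc vjc])
        moreover have "p \<sqinter> j \<sqsubseteq> v \<sqinter> j" by (rule meet_le[OF jb[OF pjc pj1 pj2] pj1 vc jc pjc])
        ultimately have "v \<sqinter> j = p \<sqinter> j" using le_antisym vjc pjc by blast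
        hence "j \<sqinter> v = j \<sqinter> p" using meet_comm by metis
        hence M1: "j \<sqinter> (v \<squnion> p) = j \<sqinter> v" by (rule MSD[OF jc vc pc])
        have vpc: "v \<squnion> p \<in> carrier L" using vc pc by simp
        have "b \<sqsubseteq> v \<squnion> p" using le_trans[OF join_left[OF bc xyc, folded v_def] join_left[OF vc pc] bc vc vpc] by simp
        moreover have "x \<sqsubseteq> v \<squnion> p" using le_trans[OF xp join_right[OF vc pc] xc pc vpc] by simp
        ultimately have "b \<squnion> x \<sqsubseteq> v \<squnion> p" by (rule join_le[OF _ _ bc xc vpc])
        hence "u \<sqsubseteq> v \<squnion> p" using le_trans[OF meet_left[OF bxc yc] _ _ bxc vpc] u_def uc by simp
        hence "j \<sqsubseteq> v \<squnion> p" using le_trans[OF ju _ jc uc vpc] by simp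
        hence "j \<sqinter> (v \<squnion> p) = j" by (rule meet_eq_left[OF jc vpc])
        hence "j \<sqinter> v = j" using M1 by simp
        hence "j \<sqsubseteq> v" using meet_right[OF jc vc] by simp
        thus False using jv by simp
      qed
    qed
  qed
  thus ?thesis unfolding left_modular_def using mc by blast
qed

end


lemma dual_chain: "is_chain (inv_gorder L) C = is_chain L C"
  unfolding is_chain_def by auto

lemma dual_maxchain: "maximal_chain (inv_gorder L) C = maximal_chain L C"
  unfolding maximal_chain_def dual_chain by simp

lemma dual_length: "lattice_length (inv_gorder L) = lattice_length L"
  unfolding lattice_length_def dual_chain by simp

lemma dual_ji: "join_irreducible (inv_gorder L) j = meet_irreducible L j"
  unfolding join_irreducible_def meet_irreducible_def by simp

lemma dual_extremal: "join_extremal (inv_gorder L) \<Longrightarrow> meet_extremal L"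
  unfolding join_extremal_def meet_extremal_def dual_length dual_ji by simp

lemma dual_lm_elem:
  assumes "lattice L" "left_modular_elem L a"
  shows "left_modular_elem (inv_gorder L) a"
proof -
  interpret lattice L by (rule assms(1))
  show ?thesis unfolding left_modular_elem_def
  proof (intro conjI ballI impI)
    show "a \<in> carrier (inv_gorder L)" using assms(2) unfolding left_modular_elem_def by simp
  next
    fix b c assume b: "b \<in> carrier (inv_gorder L)" and c: "c \<in> carrier (inv_gorder L)"
      and bc: "b \<sqsubset>\<^bsub>inv_gorder L\<^esub> c"
    have "c \<sqsubset>\<^bsub>L\<^esub> b" using bc unfolding lless_def by (auto simp add: eq_is_equal)
    hence "(c \<squnion>\<^bsub>L\<^esub> a) \<sqinter>\<^bsub>L\<^esub> b = c \<squnion>\<^bsub>L\<^esub> (a \<sqinter>\<^bsub>L\<^esub> b)" using assms(2) b c unfolding left_modular_elem_def by simp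
    thus "(b \<squnion>\<^bsub>inv_gorder L\<^esub> a) \<sqinter>\<^bsub>inv_gorder L\<^esub> c = b \<squnion>\<^bsub>inv_gorder L\<^esub> (a \<sqinter>\<^bsub>inv_gorder L\<^esub> c)"
      by (simp add: join_comm meet_comm)
  qed
qed

lemma dual_lm: "lattice L \<Longrightarrow> left_modular L \<Longrightarrow> left_modular (inv_gorder L)"
proof -
  assume lat: "lattice L" and "left_modular L"
  then obtain C where C: "maximal_chain L C" "\<forall>a\<in>C. left_modular_elem L a"
    unfolding left_modular_def by blast
  have "maximal_chain (inv_gorder L) C" using C(1) by (simp only: dual_maxchain)
  moreover have "\<forall>a\<in>C. left_modular_elem (inv_gorder L) a"
  proof
    fix a assume "a \<in> C"
    thus "left_modular_elem (inv_gorder L) a" using C(2) dual_lm_elem[OF lat] by simp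
  qed
  ultimately show ?thesis unfolding left_modular_def by blast
qed

lemma dual_flat: "flat L \<Longrightarrow> flat (inv_gorder L)"
  unfolding flat_def flat_axioms_def using lattice.dual_lattice by auto

lemma part1_gen:
  assumes "flat L" "jsd L" "left_modular L"
  shows "join_extremal L"
proof -
  interpret flat L by (rule assms(1))
  show ?thesis by (rule part1[OF jsd_alg[OF assms(2)] assms(3)])
qed

lemma part2_gen:
  assumes fl: "flat L" and M: "msd L" and lm: "left_modular L"
  shows "meet_extremal L"
proof -
  interpret flat L by (rule fl)
  interpret d: flat "inv_gorder L" by (rule dual_flat[OF fl])
  have "join_extremal (inv_gorder L)"
  proof (rule d.part1)
    fix x y z assume "x \<in> carrier (inv_gorder L)" "y \<in> carrier (inv_gorder L)" "z \<in> carrier (inv_gorder L)"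
      "x \<squnion>\<^bsub>inv_gorder L\<^esub> y = x \<squnion>\<^bsub>inv_gorder L\<^esub> z"
    thus "x \<squnion>\<^bsub>inv_gorder L\<^esub> (y \<sqinter>\<^bsub>inv_gorder L\<^esub> z) = x \<squnion>\<^bsub>inv_gorder L\<^esub> y"
      using msd_alg[OF M] by simp
  next
    show "left_modular (inv_gorder L)" by (rule dual_lm[OF lattice_axioms lm])
  qed
  thus ?thesis by (rule dual_extremal)
qed

theorem corollary3p22:
  fixes L :: "'a gorder"
  assumes "fin_lattice L"
  shows "(join_congruence_uniform L \<and> left_modular L \<longrightarrow> join_extremal L)
       \<and> (meet_congruence_uniform L \<and> left_modular L \<longrightarrow> meet_extremal L)
       \<and> (congruence_uniform L \<longrightarrow> (extremal L \<longleftrightarrow> left_modular L))"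
proof -
  have lat: "lattice L" and fin: "finite (carrier L)" and ne: "carrier L \<noteq> {}"
    using assms unfolding fin_lattice_def by auto
  have fl: "flat L" unfolding flat_def flat_axioms_def using lat fin ne by simp
  have P1: "join_congruence_uniform L \<Longrightarrow> left_modular L \<Longrightarrow> join_extremal L"
    unfolding join_congruence_uniform_def using part1_gen[OF fl] jcu_jsd by blast
  have P2: "meet_congruence_uniform L \<Longrightarrow> left_modular L \<Longrightarrow> meet_extremal L"
    unfolding meet_congruence_uniform_def using part2_gen[OF fl] mcu_msd by blast
  have P3: "extremal L \<longleftrightarrow> left_modular L" if cu: "congruence_uniform L"
  proof -
    have ob: "obtained_by_doublings is_interval L" using cu unfolding congruence_uniform_def .
    have jcu: "join_congruence_uniform L" unfolding join_congruence_uniform_def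
      by (rule obtained_mono[OF ob interval_lower])
    have mcu: "meet_congruence_uniform L" unfolding meet_congruence_uniform_def
      by (rule obtained_mono[OF ob interval_upper])
    have M: "msd L" using mcu_msd mcu unfolding meet_congruence_uniform_def by blast
    interpret flat L by (rule fl)
    show ?thesis
    proof
      assume "extremal L"
      hence "join_extremal L" unfolding extremal_def by simp
      have MSD: "x \<sqinter>\<^bsub>L\<^esub> (y \<squnion>\<^bsub>L\<^esub> z) = x \<sqinter>\<^bsub>L\<^esub> y"
        if "x \<in> carrier L" "y \<in> carrier L" "z \<in> carrier L" "x \<sqinter>\<^bsub>L\<^esub> y = x \<sqinter>\<^bsub>L\<^esub> z" for x y z
        by (rule msd_alg[OF M that])
      show "left_modular L" by (rule part3[OF MSD \<open>join_extremal L\<close>])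
    next
      assume "left_modular L"
      thus "extremal L" unfolding extremal_def using P1 P2 jcu mcu by blast
    qed
  qed
  show ?thesis using P1 P2 P3 by blast
qed

end
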